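(* For all integers $n\ge4$ and $1\le f\le n$, $\mathcal{C}(n,f)\neq\emptyset$; that is, there exists a transitive circle exchange transformation of $n$ subintervals with exactly $f$ flips.
   Context: Let $S^1=[0,1]/(0\sim1)$ with orientation induced by $[0,1]$. An $n$-CET is an injective map $T:\bigcup_{i=1}^n I_i\to S^1$, where $I_1,\dots,I_n$ are pairwise disjoint open subintervals of $S^1$ whose closures cover $S^1$, which is an isometry on each $I_i$ and cannot be continuously extended to a larger open subset of $S^1$. A flip is an $I_i$ on which $T$ reverses orientation. $T$ is transitive if some orbit $\{T^m(p): m\in\mathbb{Z},\ p\in\mathrm{Dom}(T^m)\}$ is dense in $S^1$. $\mathcal{C}(n,f)$ is the set of transitive $n$-CETs with exactly $f$ flips. *)

theory Defs
  imports "HOL-Analysis.Analysis"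
begin

text \<open>The circle S^1 = [0,1]/(0~1) is realised as the unit circle in the complex plane,
  via t \<mapsto> cis (2 pi t); the orientation induced by [0,1] is the counterclockwise one.
  The metric is the restriction of the Euclidean metric (the chordal metric), which is a
  strictly increasing function of the arc-length metric, so it has the same isometries.\<close>

definition S1 :: "complex set" where
  "S1 = sphere 0 1"

definition circ :: "real \<Rightarrow> complex" where
  "circ t = cis (2 * pi * t)"

definition open_arc :: "complex set \<Rightarrow> bool" where
  "open_arc I \<longleftrightarrow> (\<exists>a b. a < b \<and> b \<le> a + 1 \<and> I = circ ` {a<..<b})"

definition isometry_on :: "complex set \<Rightarrow> (complex \<Rightarrow> complex) \<Rightarrow> bool" where
  "isometry_on I T \<longleftrightarrow> (\<forall>x\<in>I. \<forall>y\<in>I. dist (T x) (T y) = dist x y)"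

text \<open>An isometry of an arc into the circle reverses orientation iff it agrees on the arc
  with an orientation-reversing isometry of the circle, i.e. a reflection z \<mapsto> c * cnj z.\<close>
definition reverses_orientation_on :: "complex set \<Rightarrow> (complex \<Rightarrow> complex) \<Rightarrow> bool" where
  "reverses_orientation_on I T \<longleftrightarrow> (\<exists>c. norm c = 1 \<and> (\<forall>z\<in>I. T z = c * cnj z))"

definition CET :: "nat \<Rightarrow> nat \<Rightarrow> (complex \<Rightarrow> complex) \<Rightarrow> complex set \<Rightarrow> bool" where
  "CET n f T D \<longleftrightarrow>
     (\<exists>I :: nat \<Rightarrow> complex set.
        (\<forall>i<n. open_arc (I i)) \<and>
        (\<forall>i<n. \<forall>j<n. i \<noteq> j \<longrightarrow> I i \<inter> I j = {}) \<and>
        (\<Union>i<n. closure (I i)) = S1 \<and>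
        D = (\<Union>i<n. I i) \<and>
        inj_on T D \<and> T ` D \<subseteq> S1 \<and>
        (\<forall>i<n. isometry_on (I i) T) \<and>
        \<not> (\<exists>U g. openin (top_of_set S1) U \<and> D \<subset> U \<and> continuous_on U g \<and>
                 g ` U \<subseteq> S1 \<and> (\<forall>x\<in>D. g x = T x)) \<and>
        card {i. i < n \<and> reverses_orientation_on (I i) T} = f)"

definition in_dom_iter :: "(complex \<Rightarrow> complex) \<Rightarrow> complex set \<Rightarrow> nat \<Rightarrow> complex \<Rightarrow> bool" where
  "in_dom_iter T D k p \<longleftrightarrow> (\<forall>j<k. (T ^^ j) p \<in> D)"

text \<open>Full orbit {T^m p : m \<in> Z, p \<in> Dom(T^m)}; negative powers via the inverse of T.\<close>
definition orbit :: "(complex \<Rightarrow> complex) \<Rightarrow> complex set \<Rightarrow> complex \<Rightarrow> complex set" where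
  "orbit T D p =
     {y. \<exists>k. in_dom_iter T D k p \<and> y = (T ^^ k) p} \<union>
     {y. \<exists>k. in_dom_iter T D k y \<and> (T ^^ k) y = p}"

definition transitive :: "(complex \<Rightarrow> complex) \<Rightarrow> complex set \<Rightarrow> bool" where
  "transitive T D \<longleftrightarrow> (\<exists>p\<in>S1. closure (orbit T D p) = S1)"

end

theory Submission
  imports Defs
begin


lemma circ_eq_iff: "circ x = circ y \<longleftrightarrow> (\<exists>k::int. x = y + of_int k)"
proof -
  have "circ x = circ y \<longleftrightarrow> exp (\<i> * complex_of_real (2 * pi * x)) = exp (\<i> * complex_of_real (2 * pi * y))"
    by (simp add: circ_def cis_conv_exp)
  also have "\<dots> \<longleftrightarrow> (\<exists>n::int. \<i> * complex_of_real (2 * pi * x) = \<i> * complex_of_real (2 * pi * y) + (of_int (2 * n) * pi) * \<i>)"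
    by (rule exp_eq)
  also have "\<dots> \<longleftrightarrow> (\<exists>k::int. x = y + of_int k)"
  proof
    assume "\<exists>n::int. \<i> * complex_of_real (2 * pi * x) = \<i> * complex_of_real (2 * pi * y) + (of_int (2 * n) * pi) * \<i>"
    then obtain n::int where "\<i> * complex_of_real (2 * pi * x) = \<i> * complex_of_real (2 * pi * y) + (of_int (2 * n) * pi) * \<i>" by blast
    then have "Im (\<i> * complex_of_real (2 * pi * x)) = Im (\<i> * complex_of_real (2 * pi * y) + (of_int (2 * n) * pi) * \<i>)" by simp
    then have "2 * pi * x = 2 * pi * y + 2 * pi * of_int n" by simp
    then have "pi * (2 * x) = pi * (2 * (y + of_int n))" by (simp add: algebra_simps)
    then have "2 * x = 2 * (y + of_int n)" using pi_gt_zero by simp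
    then have "x = y + of_int n" by simp
    then show "\<exists>k::int. x = y + of_int k" by blast
  next
    assume "\<exists>k::int. x = y + of_int k"
    then obtain k::int where "x = y + of_int k" by blast
    then have "\<i> * complex_of_real (2 * pi * x) = \<i> * complex_of_real (2 * pi * y) + (of_int (2 * k) * pi) * \<i>"
      by (simp add: algebra_simps)
    then show "\<exists>n::int. \<i> * complex_of_real (2 * pi * x) = \<i> * complex_of_real (2 * pi * y) + (of_int (2 * n) * pi) * \<i>" by blast
  qed
  finally show ?thesis .
qed

lemma circ_add_int: "circ (t + of_int k) = circ t"
  using circ_eq_iff by blast

lemma circ_inj01: assumes "0 \<le> s" "s < 1" "0 \<le> t" "t < 1" "circ s = circ t" shows "s = t"
proof -
  obtain k::int where k: "s = t + of_int k" using assms(5) circ_eq_iff by blast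
  then have "-1 < (of_int k::real)" "(of_int k::real) < 1" using assms by auto
  then have "k = 0" by linarith
  then show ?thesis using k by simp
qed

lemma norm_circ [simp]: "norm (circ t) = 1"
  by (simp add: circ_def)

lemma circ_in_S1 [simp]: "circ t \<in> S1"
  by (simp add: S1_def)

lemma circ_mult: "circ (s + t) = circ s * circ t"
  by (simp add: circ_def cis_mult distrib_left)

lemma circ_minus: "circ (- t) = cnj (circ t)"
  by (simp add: circ_def cis_cnj)

lemma continuous_circ: "continuous_on A circ"
  unfolding circ_def cis_conv_exp by (intro continuous_intros)

lemma isCont_circ: "isCont circ x"
  unfolding circ_def cis_conv_exp by (intro continuous_intros)

lemma circ_surj: assumes "z \<in> S1" shows "\<exists>t. 0 \<le> t \<and> t < 1 \<and> circ t = z"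
proof -
  have nz: "norm z = 1" using assms by (simp add: S1_def)
  then have z0: "z \<noteq> 0" by auto
  have "cis (Arg z) = z" using cis_Arg[OF z0] nz by (simp add: sgn_div_norm)
  then have "circ (Arg z / (2 * pi)) = z" by (simp add: circ_def)
  then have "circ (frac (Arg z / (2 * pi))) = z"
    by (metis circ_add_int frac_def diff_conv_add_uminus of_int_minus)
  moreover have "0 \<le> frac (Arg z / (2 * pi))" "frac (Arg z / (2 * pi)) < 1" by (auto simp: frac_lt_1)
  ultimately show ?thesis by blast
qed

lemma S1_eq: "S1 = circ ` {0..1}"
proof
  show "S1 \<subseteq> circ ` {0..1}" using circ_surj by fastforce
  show "circ ` {0..1} \<subseteq> S1" by auto
qed

lemma closure_circ_arc: assumes "a < b" shows "closure (circ ` {a<..<b}) = circ ` {a..b}"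
proof
  have "compact (circ ` {a..b})" by (intro compact_continuous_image continuous_circ compact_Icc)
  then have "closed (circ ` {a..b})" by (rule compact_imp_closed)
  moreover have "circ ` {a<..<b} \<subseteq> circ ` {a..b}" by auto
  ultimately show "closure (circ ` {a<..<b}) \<subseteq> circ ` {a..b}" by (simp add: closure_minimal)
  have "circ ` closure {a<..<b} \<subseteq> closure (circ ` {a<..<b})"
    by (rule continuous_image_closure_subset[OF continuous_circ]) auto
  then show "circ ` {a..b} \<subseteq> closure (circ ` {a<..<b})" using assms by simp
qed

definition aff :: "bool \<Rightarrow> real \<Rightarrow> real \<Rightarrow> real" where
  "aff e c t = (if e then c - t else t + c)"

lemma continuous_aff: "continuous_on A (aff e c)"
  unfolding aff_def by (cases e) (auto intro!: continuous_intros)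

lemma isCont_aff: "isCont (aff e c) x"
  unfolding aff_def by (cases e) (auto intro!: continuous_intros)

lemma circ_aff: "circ (aff e c t) = (if e then circ c * cnj (circ t) else circ c * circ t)"
  unfolding aff_def by (auto simp: circ_mult[symmetric] circ_minus[symmetric] algebra_simps)


lemma three_sq_false:
  fixes z1 z2 z3 :: complex
  assumes "z1^2 = z2^2" "z1^2 = z3^2" "z1 \<noteq> z2" "z1 \<noteq> z3" "z2 \<noteq> z3"
  shows False
  using assms by (metis power2_eq_iff)

lemma nonflip_not_reverses:
  assumes ab: "a < b" and T: "\<And>t. a < t \<Longrightarrow> t < b \<Longrightarrow> T (circ t) = w * circ t"
    and bnd: "0 \<le> a" "b \<le> 1"
    and rev: "reverses_orientation_on (circ ` {a<..<b}) T"
  shows False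
proof -
  obtain c where c: "norm c = 1" "\<And>z. z \<in> circ ` {a<..<b} \<Longrightarrow> T z = c * cnj z"
    using rev unfolding reverses_orientation_on_def by blast
  have key: "(circ t)^2 = c / w" if "a < t" "t < b" for t
  proof -
    have "w * circ t = c * cnj (circ t)" using T[OF that] c(2)[of "circ t"] that by auto
    moreover have "cnj (circ t) * circ t = 1"
      by (metis complex_norm_square norm_circ mult.commute of_real_1 power_one)
    ultimately have "w * circ t * circ t = c" by (metis mult.assoc mult.right_neutral)
    moreover have "w \<noteq> 0" using \<open>w * circ t = c * cnj (circ t)\<close> c(1) \<open>cnj (circ t) * circ t = 1\<close>
      by (metis mult_zero_left norm_zero zero_neq_one mult.assoc mult.right_neutral)
    ultimately show ?thesis by (simp add: power2_eq_square field_simps)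
  qed
  define t1 t2 t3 where "t1 = a + (b - a)/4" and "t2 = a + (b - a)/2" and "t3 = a + 3*(b - a)/4"
  have tt: "a < t1" "t1 < b" "a < t2" "t2 < b" "a < t3" "t3 < b" "t1 < t2" "t2 < t3"
    using ab by (auto simp: t1_def t2_def t3_def field_simps)
  have ne: "circ s \<noteq> circ t" if "a < s" "s < t" "t < b" for s t
    using circ_inj01[of s t] that bnd by fastforce
  show False
    using three_sq_false[of "circ t1" "circ t2" "circ t3"] key tt ne by force
qed

lemma CET_from_arcs:
  fixes Idx :: "'i set" and a b c :: "'i \<Rightarrow> real" and e :: "'i \<Rightarrow> bool" and T :: "complex \<Rightarrow> complex"
  assumes fin: "finite Idx"
    and bnd: "\<And>i. i \<in> Idx \<Longrightarrow> 0 \<le> a i \<and> a i < b i \<and> b i \<le> 1"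
    and disj: "\<And>i j. i \<in> Idx \<Longrightarrow> j \<in> Idx \<Longrightarrow> i \<noteq> j \<Longrightarrow> {a i<..<b i} \<inter> {a j<..<b j} = {}"
    and cov: "\<And>t. 0 \<le> t \<Longrightarrow> t \<le> 1 \<Longrightarrow> \<exists>i\<in>Idx. a i \<le> t \<and> t \<le> b i"
    and Tf: "\<And>i t. i \<in> Idx \<Longrightarrow> a i < t \<Longrightarrow> t < b i \<Longrightarrow> T (circ t) = circ (aff (e i) (c i) t)"
    and inj: "\<And>i j t t'. i \<in> Idx \<Longrightarrow> j \<in> Idx \<Longrightarrow> a i < t \<Longrightarrow> t < b i \<Longrightarrow> a j < t' \<Longrightarrow> t' < b j
               \<Longrightarrow> circ (aff (e i) (c i) t) = circ (aff (e j) (c j) t') \<Longrightarrow> t = t'"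
    and cut: "\<And>x. 0 \<le> x \<Longrightarrow> x < 1 \<Longrightarrow> (\<forall>i\<in>Idx. \<not> (a i < x \<and> x < b i)) \<Longrightarrow>
               \<exists>i\<in>Idx. \<exists>j\<in>Idx. (b i = x \<or> (x = 0 \<and> b i = 1)) \<and> a j = x \<and>
                 circ (aff (e i) (c i) (b i)) \<noteq> circ (aff (e j) (c j) (a j))"
  shows "CET (card Idx) (card {i\<in>Idx. e i}) T (\<Union>i\<in>Idx. circ ` {a i<..<b i})"
proof -
  define n where "n = card Idx"
  obtain ix where bij: "bij_betw ix {..<n} Idx"
    using ex_bij_betw_nat_finite[OF fin] unfolding n_def by (metis atLeast0LessThan)
  have ixIdx: "ix k \<in> Idx" if "k < n" for k using bij that by (auto simp: bij_betw_def)
  have ixinj: "ix k \<noteq> ix k'" if "k < n" "k' < n" "k \<noteq> k'" for k k'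
    using bij that by (auto simp: bij_betw_def inj_on_def)
  define I where "I k = circ ` {a (ix k)<..<b (ix k)}" for k
  define D where "D = (\<Union>i\<in>Idx. circ ` {a i<..<b i})"
  have img: "ix ` {..<n} = Idx" using bij by (simp add: bij_betw_def)
  have DI: "D = (\<Union>k<n. I k)" unfolding D_def I_def using img by auto
  have D_elim: "\<exists>i\<in>Idx. \<exists>t. a i < t \<and> t < b i \<and> z = circ t" if "z \<in> D" for z
    using that unfolding D_def by (auto simp: image_iff) (metis greaterThanLessThan_iff)
  have inD: "circ t \<in> D" if "i \<in> Idx" "a i < t" "t < b i" for i t
    using that unfolding D_def by (intro UN_I[of i]) auto
  have arc01: "0 < t \<and> t < 1" if "i \<in> Idx" "a i < t" "t < b i" for i t
    using bnd[OF that(1)] that by auto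
  have oa: "\<forall>k<n. open_arc (I k)"
  proof (intro allI impI)
    fix k assume "k < n"
    then have "0 \<le> a (ix k)" "a (ix k) < b (ix k)" "b (ix k) \<le> 1" using bnd ixIdx by auto
    then show "open_arc (I k)" unfolding open_arc_def I_def
      by (intro exI[of _ "a (ix k)"] exI[of _ "b (ix k)"]) auto
  qed
  have dj: "\<forall>k<n. \<forall>k'<n. k \<noteq> k' \<longrightarrow> I k \<inter> I k' = {}"
  proof (intro allI impI)
    fix k k' assume kk: "k < n" "k' < n" "k \<noteq> k'"
    show "I k \<inter> I k' = {}"
    proof (rule ccontr)
      assume "I k \<inter> I k' \<noteq> {}"
      then obtain t t' where t: "a (ix k) < t" "t < b (ix k)" "a (ix k') < t'" "t' < b (ix k')" "circ t = circ t'"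
        unfolding I_def by auto
      have "t = t'" using circ_inj01[OF _ _ _ _ t(5)] arc01[OF ixIdx[OF kk(1)] t(1,2)] arc01[OF ixIdx[OF kk(2)] t(3,4)]
        by auto
      then show False using disj[OF ixIdx[OF kk(1)] ixIdx[OF kk(2)] ixinj[OF kk]] t by auto
    qed
  qed
  have cl: "(\<Union>k<n. closure (I k)) = S1"
  proof -
    have "(\<Union>k<n. closure (I k)) = (\<Union>k<n. circ ` {a (ix k)..b (ix k)})"
      unfolding I_def using closure_circ_arc bnd ixIdx by (intro SUP_cong) auto
    also have "\<dots> = (\<Union>i\<in>Idx. circ ` {a i..b i})" using img by auto
    also have "\<dots> = S1"
    proof
      show "(\<Union>i\<in>Idx. circ ` {a i..b i}) \<subseteq> S1" by auto
      show "S1 \<subseteq> (\<Union>i\<in>Idx. circ ` {a i..b i})"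
      proof
        fix z assume "z \<in> S1"
        then obtain t where t: "0 \<le> t" "t < 1" "circ t = z" using circ_surj by blast
        then obtain i where "i \<in> Idx" "a i \<le> t" "t \<le> b i" using cov[of t] by auto
        then show "z \<in> (\<Union>i\<in>Idx. circ ` {a i..b i})" using t by (intro UN_I[of i]) auto
      qed
    qed
    finally show ?thesis .
  qed
  have injT: "inj_on T D"
  proof (rule inj_onI)
    fix z z' assume z: "z \<in> D" "z' \<in> D" "T z = T z'"
    obtain i t where it: "i \<in> Idx" "a i < t" "t < b i" "z = circ t" using D_elim[OF z(1)] by blast
    obtain j t' where jt: "j \<in> Idx" "a j < t'" "t' < b j" "z' = circ t'" using D_elim[OF z(2)] by blast
    have "circ (aff (e i) (c i) t) = circ (aff (e j) (c j) t')"
      using z(3) Tf[OF it(1-3)] Tf[OF jt(1-3)] it(4) jt(4) by simp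
    then have "t = t'" using inj[OF it(1) jt(1) it(2,3) jt(2,3)] by blast
    then show "z = z'" using it jt by simp
  qed
  have imgT: "T ` D \<subseteq> S1"
  proof
    fix w assume "w \<in> T ` D"
    then obtain z where "z \<in> D" "w = T z" by blast
    then obtain i t where it: "i \<in> Idx" "a i < t" "t < b i" "z = circ t" using D_elim by blast
    then show "w \<in> S1" using Tf[OF it(1-3)] \<open>w = T z\<close> by simp
  qed
  have iso: "\<forall>k<n. isometry_on (I k) T"
  proof (intro allI impI)
    fix k assume k: "k < n"
    let ?i = "ix k"
    have i: "?i \<in> Idx" using ixIdx[OF k] .
    have Tz: "T z = (if e ?i then circ (c ?i) * cnj z else circ (c ?i) * z)" if zI: "z \<in> I k" for z
    proof -
      obtain t where t0: "t \<in> {a ?i<..<b ?i}" "z = circ t" using zI unfolding I_def by blast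
      then have t: "a ?i < t" "t < b ?i" "z = circ t" by auto
      show ?thesis using Tf[OF i t(1,2)] t(3) circ_aff by simp
    qed
    show "isometry_on (I k) T"
      unfolding isometry_on_def
    proof (intro ballI)
      fix z z' assume zz: "z \<in> I k" "z' \<in> I k"
      show "dist (T z) (T z') = dist z z'"
      proof (cases "e ?i")
        case True
        then have "dist (T z) (T z') = norm (circ (c ?i) * (cnj z - cnj z'))"
          using Tz[OF zz(1)] Tz[OF zz(2)] by (simp add: dist_norm algebra_simps)
        also have "\<dots> = norm (cnj (z - z'))" by (simp only: norm_mult norm_circ complex_cnj_diff mult_1)
        also have "\<dots> = dist z z'" by (simp only: complex_mod_cnj dist_norm)
        finally show ?thesis .
      next
        case False
        then have "dist (T z) (T z') = norm (circ (c ?i) * (z - z'))"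
          using Tz[OF zz(1)] Tz[OF zz(2)] by (simp add: dist_norm algebra_simps)
        also have "\<dots> = dist z z'" by (simp add: norm_mult dist_norm)
        finally show ?thesis .
      qed
    qed
  qed
  have noext: "\<not> (\<exists>U g. openin (top_of_set S1) U \<and> D \<subset> U \<and> continuous_on U g \<and>
                 g ` U \<subseteq> S1 \<and> (\<forall>x\<in>D. g x = T x))"
  proof
    assume "\<exists>U g. openin (top_of_set S1) U \<and> D \<subset> U \<and> continuous_on U g \<and> g ` U \<subseteq> S1 \<and> (\<forall>x\<in>D. g x = T x)"
    then obtain U g where U: "openin (top_of_set S1) U" "D \<subset> U" "continuous_on U g" "\<forall>x\<in>D. g x = T x"
      by blast
    obtain z where z: "z \<in> U" "z \<notin> D" using U(2) by blast
    have "U \<subseteq> S1" using openin_subset[OF U(1)] by simp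
    then obtain x where x: "0 \<le> x" "x < 1" "circ x = z" using circ_surj z(1) by blast
    have notin: "\<forall>i\<in>Idx. \<not> (a i < x \<and> x < b i)"
      using inD z(2) x(3) by blast
    obtain i j where ij: "i \<in> Idx" "j \<in> Idx" "b i = x \<or> (x = 0 \<and> b i = 1)" "a j = x"
      "circ (aff (e i) (c i) (b i)) \<noteq> circ (aff (e j) (c j) (a j))"
      using cut[OF x(1,2) notin] by blast
    have zb: "circ (b i) = z" using ij(3) x(3) circ_add_int[of 0 1] by auto
    have evL: "eventually (\<lambda>t. t \<in> {a i<..<b i}) (at_left (b i))"
      using eventually_at_left_real bnd[OF ij(1)] by blast
    have limL1: "(circ \<longlongrightarrow> z) (at_left (b i))"
      using isCont_circ[of "b i"] zb unfolding isCont_def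
      by (metis tendsto_mono at_le subset_UNIV)
    have "eventually (\<lambda>t. circ t \<in> U) (at_left (b i))"
      using evL by eventually_elim (use inD[OF ij(1)] U(2) in auto)
    then have limL2: "((\<lambda>t. g (circ t)) \<longlongrightarrow> g z) (at_left (b i))"
      by (rule continuous_on_tendsto_compose[OF U(3) limL1 z(1)])
    have limL3: "((\<lambda>t. circ (aff (e i) (c i) t)) \<longlongrightarrow> circ (aff (e i) (c i) (b i))) (at_left (b i))"
    proof -
      have "isCont (\<lambda>t. circ (aff (e i) (c i) t)) (b i)"
        by (rule continuous_at_compose[unfolded o_def, OF isCont_aff isCont_circ])
      then show ?thesis unfolding isCont_def by (metis tendsto_mono at_le subset_UNIV)
    qed
    have "eventually (\<lambda>t. circ (aff (e i) (c i) t) = g (circ t)) (at_left (b i))"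
      using evL by eventually_elim (use inD[OF ij(1)] U(4) Tf[OF ij(1)] in auto)
    then have "((\<lambda>t. g (circ t)) \<longlongrightarrow> circ (aff (e i) (c i) (b i))) (at_left (b i))"
      by (rule Lim_transform_eventually[OF limL3])
    then have gL: "g z = circ (aff (e i) (c i) (b i))"
      using limL2 tendsto_unique trivial_limit_at_left_real by blast
    have evR: "eventually (\<lambda>t. t \<in> {a j<..<b j}) (at_right (a j))"
      using eventually_at_right_real bnd[OF ij(2)] by blast
    have limR1: "(circ \<longlongrightarrow> z) (at_right (a j))"
      using isCont_circ[of "a j"] ij(4) x(3) unfolding isCont_def
      by (metis tendsto_mono at_le subset_UNIV)
    have "eventually (\<lambda>t. circ t \<in> U) (at_right (a j))"
      using evR by eventually_elim (use inD[OF ij(2)] U(2) in auto)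
    then have limR2: "((\<lambda>t. g (circ t)) \<longlongrightarrow> g z) (at_right (a j))"
      by (rule continuous_on_tendsto_compose[OF U(3) limR1 z(1)])
    have limR3: "((\<lambda>t. circ (aff (e j) (c j) t)) \<longlongrightarrow> circ (aff (e j) (c j) (a j))) (at_right (a j))"
    proof -
      have "isCont (\<lambda>t. circ (aff (e j) (c j) t)) (a j)"
        by (rule continuous_at_compose[unfolded o_def, OF isCont_aff isCont_circ])
      then show ?thesis unfolding isCont_def by (metis tendsto_mono at_le subset_UNIV)
    qed
    have "eventually (\<lambda>t. circ (aff (e j) (c j) t) = g (circ t)) (at_right (a j))"
      using evR by eventually_elim (use inD[OF ij(2)] U(4) Tf[OF ij(2)] in auto)
    then have "((\<lambda>t. g (circ t)) \<longlongrightarrow> circ (aff (e j) (c j) (a j))) (at_right (a j))"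
      by (rule Lim_transform_eventually[OF limR3])
    then have gR: "g z = circ (aff (e j) (c j) (a j))"
      using limR2 tendsto_unique trivial_limit_at_right_real by blast
    show False using gL gR ij(5) by simp
  qed
  have rev_iff: "reverses_orientation_on (I k) T \<longleftrightarrow> e (ix k)" if k: "k < n" for k
  proof
    let ?i = "ix k"
    have i: "?i \<in> Idx" using ixIdx[OF k] .
    assume rv: "reverses_orientation_on (I k) T"
    show "e ?i"
    proof (rule ccontr)
      assume ne: "\<not> e ?i"
      have "T (circ t) = circ (c ?i) * circ t" if "a ?i < t" "t < b ?i" for t
        using Tf[OF i that] ne circ_aff by simp
      then show False using nonflip_not_reverses[of "a ?i" "b ?i" T "circ (c ?i)"] bnd[OF i] rv
        unfolding I_def by blast
    qed
  next
    let ?i = "ix k"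
    have i: "?i \<in> Idx" using ixIdx[OF k] .
    assume "e ?i"
    then have "\<forall>z\<in>I k. T z = circ (c ?i) * cnj z"
      unfolding I_def using Tf[OF i] circ_aff by auto
    then show "reverses_orientation_on (I k) T"
      unfolding reverses_orientation_on_def by (intro exI[of _ "circ (c ?i)"]) simp
  qed
  have fl: "card {k. k < n \<and> reverses_orientation_on (I k) T} = card {i\<in>Idx. e i}"
  proof -
    have "{k. k < n \<and> reverses_orientation_on (I k) T} = {k\<in>{..<n}. e (ix k)}"
      using rev_iff by auto
    moreover have "bij_betw ix {k\<in>{..<n}. e (ix k)} {i\<in>Idx. e i}"
      using bij unfolding bij_betw_def inj_on_def by auto
    ultimately show ?thesis by (simp add: bij_betw_same_card)
  qed
  show ?thesis
    unfolding CET_def n_def[symmetric] D_def[symmetric]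
    apply (rule exI[of _ I])
    using oa dj cl DI injT imgT iso noext fl by blast
qed



datatype sty = Id | TT | FF | IP

fun np :: "sty \<Rightarrow> nat" where
  "np Id = 1" | "np TT = 2" | "np FF = 1" | "np IP = 2"

fun isflip :: "sty \<Rightarrow> bool" where
  "isflip Id = False" | "isflip TT = False" | "isflip FF = True" | "isflip IP = True"

fun gmap :: "sty \<Rightarrow> real \<Rightarrow> real \<Rightarrow> real" where
  "gmap Id c w = w"
| "gmap TT c w = (if w < c then w + 1 - c else w - c)"
| "gmap FF c w = 1 - w"
| "gmap IP c w = (if w < c then c - w else c + 1 - w)"

fun vval :: "sty \<Rightarrow> real \<Rightarrow> real" where
  "vval Id c = 1" | "vval TT c = 1 - c" | "vval FF c = 0" | "vval IP c = c"

fun wval :: "sty \<Rightarrow> real \<Rightarrow> real" where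
  "wval Id c = 0" | "wval TT c = 1 - c" | "wval FF c = 1" | "wval IP c = c"

definition bok :: "nat \<Rightarrow> sty \<Rightarrow> sty \<Rightarrow> nat \<Rightarrow> nat \<Rightarrow> bool" where
  "bok h sL sR A B \<longleftrightarrow> \<not> (sL = Id \<and> sR = Id \<and> B = (A + 1) mod h) \<and> \<not> (sL = FF \<and> sR = FF \<and> A = (B + 1) mod h)"

lemma np_pos: "0 < np s" and np_le: "np s \<le> 2" by (cases s; simp)+

lemma gmap_range:
  assumes "0 < w" "w < 1" "0 < c" "c < 1" "np s = 2 \<Longrightarrow> w \<noteq> c"
  shows "0 < gmap s c w \<and> gmap s c w < 1"
  using assms by (cases s) auto

lemma gmap_inj:
  assumes "0 < w" "w < 1" "0 < c" "c < 1" "np s = 2 \<Longrightarrow> w \<noteq> c"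
    "0 < w'" "w' < 1" "np s = 2 \<Longrightarrow> w' \<noteq> c" "gmap s c w = gmap s c w'"
  shows "w = w'"
  using assms by (cases s) (auto split: if_splits)

lemma vval_range: "0 < c \<Longrightarrow> c < 1 \<Longrightarrow> 0 \<le> vval s c \<and> vval s c \<le> 1"
  by (cases s) auto
lemma wval_range: "0 < c \<Longrightarrow> c < 1 \<Longrightarrow> 0 \<le> wval s c \<and> wval s c \<le> 1"
  by (cases s) auto

lemma int_small_mult_zero:
  fixes m :: int and h :: nat
  assumes "0 < h" "\<bar>m * int h\<bar> < int h"
  shows "m = 0"
proof (rule ccontr)
  assume "m \<noteq> 0"
  then have "1 \<le> \<bar>m\<bar>" by simp
  then have "int h \<le> \<bar>m\<bar> * int h" using assms(1) by simp
  then show False using assms(2) by (simp add: abs_mult)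
qed

lemma mod_from_eq:
  fixes A B h :: nat and m :: int
  assumes "B < h" "int A + 1 = int B + m * int h"
  shows "B = (A + 1) mod h"
proof -
  have "(int A + 1) mod int h = (int B + m * int h) mod int h" using assms(2) by simp
  also have "\<dots> = int B mod int h" by simp
  also have "\<dots> = int B" using assms(1) by simp
  finally have "int ((A + 1) mod h) = int B" by (simp add: zmod_int add.commute)
  then show ?thesis by simp
qed

lemma bok_circ:
  fixes A B h :: nat
  assumes h: "2 \<le> h" and AB: "A < h" "B < h" "A \<noteq> B"
    and bk: "bok h sL sR A B" and c: "0 < c" "c < 1" "0 < c'" "c' < 1"
  shows "circ ((real A + vval sL c) / h) \<noteq> circ ((real B + wval sR c') / h)"
proof
  assume "circ ((real A + vval sL c) / h) = circ ((real B + wval sR c') / h)"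
  then obtain m :: int where m: "(real A + vval sL c) / h = (real B + wval sR c') / h + of_int m"
    using circ_eq_iff by blast
  have hpos: "(0::real) < h" using h by simp
  have eq: "real A - real B + (vval sL c - wval sR c') = of_int m * h"
    using m hpos by (simp add: field_simps)
  have vr: "0 \<le> vval sL c" "vval sL c \<le> 1" using vval_range c by auto
  have wr: "0 \<le> wval sR c'" "wval sR c' \<le> 1" using wval_range c by auto
  obtain k :: int where k: "vval sL c - wval sR c' = of_int k"
  proof -
    have "vval sL c - wval sR c' = of_int (m * int h - int A + int B)" using eq by simp
    then show ?thesis using that by blast
  qed
  have kr: "k = -1 \<or> k = 0 \<or> k = 1" using k vr wr by linarith
  have ieq: "int A - int B + k = m * int h"
  proof -
    have "real_of_int (int A - int B + k) = real_of_int (m * int h)" using eq k by simp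
    then show ?thesis by (simp only: of_int_eq_iff)
  qed
  have hi: "0 < h" using h by simp
  show False
  proof -
    { assume "k = 0"
      then have "\<bar>m * int h\<bar> < int h" using ieq AB by simp
      then have "m = 0" by (rule int_small_mult_zero[OF hi])
      then have False using ieq \<open>k = 0\<close> AB by simp }
    moreover
    { assume k1: "k = 1"
      then have vv: "vval sL c = 1" "wval sR c' = 0" using k vr wr by linarith+
      have sl: "sL = Id" using vv(1) c by (cases sL) auto
      have sr: "sR = Id" using vv(2) c by (cases sR) auto
      have "int A + 1 = int B + m * int h" using ieq k1 by simp
      then have "B = (A + 1) mod h" using mod_from_eq AB by blast
      then have False using bk sl sr by (simp add: bok_def) }
    moreover
    { assume k2: "k = -1"
      then have vv: "vval sL c = 0" "wval sR c' = 1" using k vr wr by linarith+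
      have sl: "sL = FF" using vv(1) c by (cases sL) auto
      have sr: "sR = FF" using vv(2) c by (cases sR) auto
      have "int B + 1 = int A + (- m) * int h" using ieq k2 by simp
      then have "A = (B + 1) mod h" using mod_from_eq AB by blast
      then have False using bk sl sr by (simp add: bok_def) }
    ultimately show False using kr by blast
  qed
qed


locale slotcet =
  fixes h :: nat and ty :: "nat \<Rightarrow> sty" and cs :: "nat \<Rightarrow> real" and nxt :: "nat \<Rightarrow> nat" and dbl :: bool
  assumes h3: "3 \<le> h"
    and cs0: "\<And>x. 0 < cs x" and cs1: "\<And>x. cs x < 1"
    and nxt_lt: "\<And>x. x < h \<Longrightarrow> nxt x < h"
    and nxt_inj: "inj_on nxt {..<h}"
    and dbl_ok: "dbl \<Longrightarrow> ty 1 = FF \<and> ty 2 = FF \<and> nxt 1 = (nxt 2 + 1) mod h"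
    and bd_ok: "\<And>y. y < h \<Longrightarrow> \<not> (dbl \<and> y = 2) \<Longrightarrow>
                  bok h (ty ((y + h - 1) mod h)) (ty y) (nxt ((y + h - 1) mod h)) (nxt y)"
begin

definition slot :: "real \<Rightarrow> nat" where "slot t = nat \<lfloor>t * h\<rfloor>"
definition off :: "real \<Rightarrow> real" where "off t = t * h - real (slot t)"
definition F :: "real \<Rightarrow> real" where
  "F t = (real (nxt (slot t)) + gmap (ty (slot t)) (cs (slot t)) (off t)) / h"
definition ang :: "complex \<Rightarrow> real" where "ang z = (SOME t. 0 \<le> t \<and> t < 1 \<and> circ t = z)"
definition T :: "complex \<Rightarrow> complex" where "T z = circ (F (ang z))"
definition Idx :: "(nat \<times> nat) set" where
  "Idx = {(x,k). x < h \<and> k < np (ty x) \<and> \<not> (dbl \<and> x = 2)}"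
definition aa :: "nat \<times> nat \<Rightarrow> real" where
  "aa i = (case i of (x,k) \<Rightarrow> if k = 0 then real x / h else (real x + cs x) / h)"
definition bb :: "nat \<times> nat \<Rightarrow> real" where
  "bb i = (case i of (x,k) \<Rightarrow> if k = 0 then (if np (ty x) = 2 then (real x + cs x) / h
            else if dbl \<and> x = 1 then 3 / h else (real x + 1) / h) else (real x + 1) / h)"
definition ee :: "nat \<times> nat \<Rightarrow> bool" where "ee i = isflip (ty (fst i))"
definition cc :: "nat \<times> nat \<Rightarrow> real" where
  "cc i = (case i of (x,k) \<Rightarrow> (case ty x of
       Id \<Rightarrow> (real (nxt x) - x) / h
     | TT \<Rightarrow> (if k = 0 then (real (nxt x) - x + 1 - cs x) / h else (real (nxt x) - x - cs x) / h)
     | FF \<Rightarrow> (real (nxt x) + x + 1) / h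
     | IP \<Rightarrow> (if k = 0 then (real (nxt x) + x + cs x) / h else (real (nxt x) + x + cs x + 1) / h)))"
definition D :: "complex set" where "D = (\<Union>i\<in>Idx. circ ` {aa i<..<bb i})"
definition gd :: "real \<Rightarrow> bool" where
  "gd t \<longleftrightarrow> 0 \<le> t \<and> t < 1 \<and> 0 < off t \<and> (np (ty (slot t)) = 2 \<longrightarrow> off t \<noteq> cs (slot t))"

lemma hpos: "(0::real) < h" using h3 by simp
lemma hne: "real h \<noteq> 0" using hpos by simp

lemma ang_circ: fixes t :: real assumes "0 \<le> t" "t < 1" shows "ang (circ t) = t"
proof -
  have ex: "0 \<le> t \<and> t < 1 \<and> circ t = circ t" using assms by simp
  have "0 \<le> ang (circ t) \<and> ang (circ t) < 1 \<and> circ (ang (circ t)) = circ t"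
    unfolding ang_def by (rule someI[of _ t]) (rule ex)
  then show ?thesis using circ_inj01 assms by blast
qed

lemma T_circ: "0 \<le> t \<Longrightarrow> t < 1 \<Longrightarrow> T (circ t) = circ (F t)"
  by (simp add: T_def ang_circ)

lemma slot_eq: fixes t :: real assumes "real x \<le> t * h" "t * h < real x + 1"
  shows "slot t = x" "off t = t * h - x"
proof -
  have "\<lfloor>t * h\<rfloor> = int x" using assms by (simp add: floor_eq_iff)
  then show "slot t = x" by (simp add: slot_def)
  then show "off t = t * h - x" by (simp add: off_def)
qed

lemma slot_lt: fixes t :: real assumes "0 \<le> t" "t < 1" shows "slot t < h"
proof -
  have "t * h < h" using assms hpos by simp
  then have "\<lfloor>t * h\<rfloor> < int h" by (simp add: floor_less_iff)
  then show ?thesis unfolding slot_def using assms by (simp add: nat_less_iff)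
qed

lemma off_range: fixes t :: real assumes "0 \<le> t" shows "0 \<le> off t" "off t < 1"
proof -
  have "0 \<le> t * h" using assms hpos by simp
  then have "real (slot t) = of_int \<lfloor>t * h\<rfloor>" unfolding slot_def by simp
  then show "0 \<le> off t" "off t < 1" unfolding off_def by linarith+
qed

lemma slot_off: fixes t :: real assumes "0 \<le> t" shows "t * h = real (slot t) + off t"
  by (simp add: off_def)

lemma gd_F: assumes "gd t"
  shows "real (nxt (slot t)) < F t * h" "F t * h < real (nxt (slot t)) + 1" "0 < F t" "F t < 1"
proof -
  have t: "0 \<le> t" "t < 1" "0 < off t" "np (ty (slot t)) = 2 \<longrightarrow> off t \<noteq> cs (slot t)"
    using assms by (auto simp: gd_def)
  have g: "0 < gmap (ty (slot t)) (cs (slot t)) (off t) \<and> gmap (ty (slot t)) (cs (slot t)) (off t) < 1"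
    using gmap_range[of "off t" "cs (slot t)" "ty (slot t)"] t off_range cs0 cs1 by auto
  have Fh: "F t * h = real (nxt (slot t)) + gmap (ty (slot t)) (cs (slot t)) (off t)"
    unfolding F_def using hpos by simp
  show "real (nxt (slot t)) < F t * h" "F t * h < real (nxt (slot t)) + 1" using Fh g by auto
  have "nxt (slot t) < h" using nxt_lt slot_lt t by auto
  then have "real (nxt (slot t)) + 1 \<le> h" by linarith
  then have "0 < F t * h" "F t * h < h" using Fh g by auto
  then show "0 < F t" "F t < 1" using hpos by (simp_all add: zero_less_mult_iff)
qed

lemma F_inj: assumes "gd t" "gd t'" "circ (F t) = circ (F t')" shows "t = t'"
proof -
  have eq: "F t = F t'" using circ_inj01[OF _ _ _ _ assms(3)] gd_F[OF assms(1)] gd_F[OF assms(2)] by auto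
  have t: "0 \<le> t" "t < 1" "0 < off t" "np (ty (slot t)) = 2 \<longrightarrow> off t \<noteq> cs (slot t)"
    using assms(1) by (auto simp: gd_def)
  have t': "0 \<le> t'" "t' < 1" "0 < off t'" "np (ty (slot t')) = 2 \<longrightarrow> off t' \<noteq> cs (slot t')"
    using assms(2) by (auto simp: gd_def)
  have "\<lfloor>F t * h\<rfloor> = int (nxt (slot t))" using gd_F[OF assms(1)] by (simp add: floor_eq_iff)
  moreover have "\<lfloor>F t' * h\<rfloor> = int (nxt (slot t'))" using gd_F[OF assms(2)] by (simp add: floor_eq_iff)
  ultimately have "nxt (slot t) = nxt (slot t')" using eq by simp
  then have sx: "slot t = slot t'" using nxt_inj slot_lt t t' by (auto simp: inj_on_def)
  have "gmap (ty (slot t)) (cs (slot t)) (off t) = gmap (ty (slot t)) (cs (slot t)) (off t')"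
    using eq sx unfolding F_def using hpos by (simp add: divide_cancel_right)
  then have "off t = off t'"
    using gmap_inj[of "off t" "cs (slot t)" "ty (slot t)" "off t'"] t t' sx off_range cs0 cs1 by auto
  then have "t * h = t' * h" using slot_off t t' sx by auto
  then show ?thesis using hpos by simp
qed


lemma dbl_nxt: assumes "dbl" shows "nxt 1 = nxt 2 + 1 \<or> (nxt 2 + 1 = h \<and> nxt 1 = 0)"
proof -
  have "nxt 2 < h" using nxt_lt h3 by simp
  moreover have "nxt 1 = (nxt 2 + 1) mod h" using dbl_ok assms by blast
  ultimately show ?thesis
    by (metis Suc_eq_plus1 Suc_lessI mod_less mod_self)
qed

lemma Idx_cases:
  assumes "i \<in> Idx"
  obtains (single) x where "i = (x,0)" "x < h" "np (ty x) = 1" "\<not> (dbl \<and> x = 1)" "\<not> (dbl \<and> x = 2)"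
       "aa i = real x / h" "bb i = (real x + 1) / h"
  | (dblc) "dbl" "i = (1,0)" "aa i = 1 / h" "bb i = 3 / h"
  | (left) x where "i = (x,0)" "x < h" "np (ty x) = 2" "aa i = real x / h" "bb i = (real x + cs x) / h"
  | (right) x where "i = (x,1)" "x < h" "np (ty x) = 2" "aa i = (real x + cs x) / h" "bb i = (real x + 1) / h"
proof -
  obtain x k where i: "i = (x,k)" "x < h" "k < np (ty x)" "\<not> (dbl \<and> x = 2)"
    using assms unfolding Idx_def by auto
  show ?thesis
  proof (cases "np (ty x) = 2")
    case True
    then have "k = 0 \<or> k = 1" using i by auto
    then show ?thesis
    proof
      assume "k = 0" then show ?thesis using left[of x] i True by (simp add: aa_def bb_def)
    next
      assume "k = 1" then show ?thesis using right[of x] i True by (simp add: aa_def bb_def)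
    qed
  next
    case False
    then have np1: "np (ty x) = 1" using np_pos[of "ty x"] np_le[of "ty x"] by linarith
    then have k0: "k = 0" using i by auto
    show ?thesis
    proof (cases "dbl \<and> x = 1")
      case True
      then have "ty 1 = FF" using dbl_ok by blast
      then have "aa i = 1 / h" "bb i = 3 / h" using True i k0 unfolding aa_def bb_def by auto
      then show ?thesis using dblc True i k0 by auto
    next
      case False then show ?thesis using single[of x] i k0 np1 by (simp add: aa_def bb_def)
    qed
  qed
qed

lemma lt_div_iff: "a / real h < t \<longleftrightarrow> a < t * h" using hpos by (simp add: pos_divide_less_eq)
lemma div_lt_iff: "t < a / real h \<longleftrightarrow> t * h < a" using hpos by (simp add: pos_less_divide_eq)

lemma arc_bounds: assumes "i \<in> Idx" shows "0 \<le> aa i" "aa i < bb i" "bb i \<le> 1"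
proof -
  have h1: "(1::real) \<le> h" using h3 by simp
  have "0 \<le> aa i \<and> aa i < bb i \<and> bb i \<le> 1"
    using assms
  proof (cases rule: Idx_cases)
    case (single x)
    have "real x / h < (real x + 1) / h" using hpos by (simp add: divide_strict_right_mono)
    moreover have "(real x + 1) / h \<le> 1" using single(2) hpos by (simp add: divide_le_eq)
    ultimately show ?thesis using single hpos by simp
  next
    case dblc
    have "1 / real h < 3 / h" using hpos by (simp add: divide_strict_right_mono)
    moreover have "3 / real h \<le> 1" using h3 hpos by (simp add: divide_le_eq)
    ultimately show ?thesis using dblc hpos by simp
  next
    case (left x)
    have "real x / h < (real x + cs x) / h" using hpos cs0[of x] by (simp add: divide_strict_right_mono)
    moreover have "(real x + cs x) / h \<le> 1" using left(2) hpos cs1[of x] by (simp add: divide_le_eq)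
    ultimately show ?thesis using left hpos by simp
  next
    case (right x)
    have "(real x + cs x) / h < (real x + 1) / h" using hpos cs1[of x] by (simp add: divide_strict_right_mono)
    moreover have "(real x + 1) / h \<le> 1" using right(2) hpos by (simp add: divide_le_eq)
    moreover have "0 \<le> (real x + cs x) / h" using hpos cs0[of x] by simp
    ultimately show ?thesis using right hpos by simp
  qed
  then show "0 \<le> aa i" "aa i < bb i" "bb i \<le> 1" by auto
qed

lemma arc_main:
  assumes i: "i \<in> Idx" and t: "aa i < t" "t < bb i"
  shows "circ (F t) = circ (aff (ee i) (cc i) t)"
    and "gd t \<or> (dbl \<and> i = (1,0) \<and> t = 2 / h)"
proof -
  have "circ (F t) = circ (aff (ee i) (cc i) t) \<and> (gd t \<or> (dbl \<and> i = (1,0) \<and> t = 2 / h))"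
    using i
  proof (cases rule: Idx_cases)
    case (single x)
    have th: "real x < t * h" "t * h < real x + 1" using t single by (auto simp: lt_div_iff div_lt_iff)
    have so: "slot t = x" "off t = t * h - x" using slot_eq th by auto
    have t01: "0 \<le> t" "t < 1" using arc_bounds[OF i] t by auto
    have g: "gd t" unfolding gd_def using t01 so th single by auto
    have Fe: "F t = (real (nxt x) + gmap (ty x) (cs x) (t * h - x)) / h" unfolding F_def using so by simp
    have "ty x = Id \<or> ty x = FF" using single by (cases "ty x") auto
    then have "F t = aff (ee i) (cc i) t"
    proof
      assume a: "ty x = Id"
      then show ?thesis using Fe single hne by (simp add: aff_def ee_def cc_def field_simps)
    next
      assume a: "ty x = FF"
      then show ?thesis using Fe single hne by (simp add: aff_def ee_def cc_def field_simps)
    qed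
    then show ?thesis using g by simp
  next
    case (left x)
    have th: "real x < t * h" "t * h < real x + cs x" using t left by (auto simp: lt_div_iff div_lt_iff)
    have so: "slot t = x" "off t = t * h - x" using slot_eq th cs1[of x] by auto
    have t01: "0 \<le> t" "t < 1" using arc_bounds[OF i] t by auto
    have g: "gd t" unfolding gd_def using t01 so th left by auto
    have Fe: "F t = (real (nxt x) + gmap (ty x) (cs x) (t * h - x)) / h" unfolding F_def using so by simp
    have lt: "t * h - x < cs x" using th by simp
    have "ty x = TT \<or> ty x = IP" using left by (cases "ty x") auto
    then have "F t = aff (ee i) (cc i) t"
    proof
      assume a: "ty x = TT"
      then show ?thesis using Fe left hne lt by (simp add: aff_def ee_def cc_def field_simps)
    next
      assume a: "ty x = IP"
      then show ?thesis using Fe left hne lt by (simp add: aff_def ee_def cc_def field_simps)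
    qed
    then show ?thesis using g by simp
  next
    case (right x)
    have th: "real x + cs x < t * h" "t * h < real x + 1" using t right by (auto simp: lt_div_iff div_lt_iff)
    have so: "slot t = x" "off t = t * h - x" using slot_eq th cs0[of x] by auto
    have t01: "0 \<le> t" "t < 1" using arc_bounds[OF i] t by auto
    have g: "gd t" unfolding gd_def using t01 so th right cs0[of x] by auto
    have Fe: "F t = (real (nxt x) + gmap (ty x) (cs x) (t * h - x)) / h" unfolding F_def using so by simp
    have lt: "\<not> t * h - x < cs x" using th by simp
    have "ty x = TT \<or> ty x = IP" using right by (cases "ty x") auto
    then have "F t = aff (ee i) (cc i) t"
    proof
      assume a: "ty x = TT"
      then show ?thesis using Fe right hne lt by (simp add: aff_def ee_def cc_def field_simps)
    next
      assume a: "ty x = IP"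
      then show ?thesis using Fe right hne lt by (simp add: aff_def ee_def cc_def field_simps)
    qed
    then show ?thesis using g by simp
  next
    case dblc
    have th: "1 < t * h" "t * h < 3" using t dblc by (auto simp: lt_div_iff div_lt_iff)
    have t01: "0 \<le> t" "t < 1" using arc_bounds[OF i] t by auto
    have ty12: "ty 1 = FF" "ty 2 = FF" using dbl_ok dblc by auto
    have ccv: "cc i = (real (nxt 1) + 2) / h" "ee i" using dblc ty12 by (simp_all add: cc_def ee_def)
    show ?thesis
    proof (cases "t * h < 2")
      case True
      have so: "slot t = 1" "off t = t * h - 1" using slot_eq[of 1 t] th True by auto
      have g: "gd t" unfolding gd_def using t01 so th ty12 by auto
      have "F t = (real (nxt 1) + 1 - (t * h - 1)) / h" unfolding F_def using so ty12 by simp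
      then have "F t = (real (nxt 1) + 2) / h - t" using hne by (simp add: field_simps)
      then have "F t = aff (ee i) (cc i) t" using ccv by (simp add: aff_def)
      then show ?thesis using g by simp
    next
      case False
      have so: "slot t = 2" "off t = t * h - 2" using slot_eq[of 2 t] th False by auto
      have "F t = (real (nxt 2) + 1 - (t * h - 2)) / h" unfolding F_def using so ty12 by simp
      then have Fv: "F t = (real (nxt 2) + 3) / h - t" using hne by (simp add: field_simps)
      have av: "aff (ee i) (cc i) t = (real (nxt 1) + 2) / h - t" using ccv by (simp add: aff_def)
      have "F t = aff (ee i) (cc i) t \<or> F t = aff (ee i) (cc i) t + 1"
      proof (cases "nxt 1 = nxt 2 + 1")
        case True
        then have "real (nxt 1) = real (nxt 2) + 1" by simp
        then have "F t = aff (ee i) (cc i) t" using av Fv by (simp add: add_divide_distrib)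
        then show ?thesis by blast
      next
        case False
        then have "nxt 2 + 1 = h" "nxt 1 = 0" using dbl_nxt dblc by auto
        then have r: "real (nxt 2) + 1 = real h" "real (nxt 1) = 0" by (metis of_nat_1 of_nat_add, simp)
        have "F t = (real (nxt 2) + 1 + 2) / h - t" using Fv by simp
        also have "\<dots> = 1 + 2 / h - t" using r(1) hne by (simp add: add_divide_distrib)
        also have "\<dots> = aff (ee i) (cc i) t + 1" using av r(2) by simp
        finally show ?thesis by blast
      qed
      then have c: "circ (F t) = circ (aff (ee i) (cc i) t)"
        using circ_add_int[of _ 1] by auto
      have "gd t \<or> t = 2 / h"
      proof (cases "t * h = 2")
        case True then show ?thesis using hpos by (auto simp: field_simps)
      next
        case False
        then show ?thesis unfolding gd_def using t01 so th ty12 \<open>\<not> t * h < 2\<close> by auto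
      qed
      then show ?thesis using c dblc by auto
    qed
  qed
  then show "circ (F t) = circ (aff (ee i) (cc i) t)" "gd t \<or> (dbl \<and> i = (1,0) \<and> t = 2 / h)" by auto
qed


lemma Idx_iff: "(x,k) \<in> Idx \<longleftrightarrow> x < h \<and> k < np (ty x) \<and> \<not> (dbl \<and> x = 2)"
  by (simp add: Idx_def)

lemma Idx10: assumes "dbl" shows "(1,0) \<in> Idx"
proof -
  have "ty 1 = FF" using dbl_ok assms by blast
  then show ?thesis unfolding Idx_def using h3 by simp
qed

lemma bb_dbl: assumes "dbl" shows "bb (1,0) = 3 / h"
proof -
  have "ty 1 = FF" using dbl_ok assms by blast
  then show ?thesis unfolding bb_def using assms by simp
qed

lemma gd_in_arc: assumes g: "gd t" shows "\<exists>i\<in>Idx. aa i < t \<and> t < bb i"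
proof -
  define x where "x = slot t"
  have t: "0 \<le> t" "t < 1" "0 < off t" "np (ty x) = 2 \<longrightarrow> off t \<noteq> cs x"
    using g by (auto simp: gd_def x_def)
  have xh: "x < h" using slot_lt t x_def by auto
  have o1: "off t < 1" using off_range t by auto
  have th: "t * h = real x + off t" using slot_off t x_def by auto
  show ?thesis
  proof (cases "dbl \<and> (x = 1 \<or> x = 2)")
    case True
    have ty1: "ty 1 = FF" using dbl_ok True by blast
    have "(1,0) \<in> Idx" using Idx10 True by blast
    moreover have "aa (1,0) < t" "t < bb (1,0)" using True th t o1 ty1 bb_dbl by (auto simp: aa_def lt_div_iff div_lt_iff)
    ultimately show ?thesis by blast
  next
    case nd: False
    show ?thesis
    proof (cases "np (ty x) = 2")
      case True
      show ?thesis
      proof (cases "off t < cs x")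
        case True
        have "(x,0) \<in> Idx" using xh \<open>np (ty x) = 2\<close> nd by (simp add: Idx_def)
        moreover have "aa (x,0) < t" "t < bb (x,0)" using True th t \<open>np (ty x) = 2\<close>
          by (auto simp: aa_def bb_def lt_div_iff div_lt_iff)
        ultimately show ?thesis by blast
      next
        case False
        then have "cs x < off t" using t \<open>np (ty x) = 2\<close> by auto
        have "(x,1) \<in> Idx" using xh \<open>np (ty x) = 2\<close> nd by (simp add: Idx_def)
        moreover have "aa (x,1) < t" "t < bb (x,1)" using \<open>cs x < off t\<close> th t o1
          by (auto simp: aa_def bb_def lt_div_iff div_lt_iff)
        ultimately show ?thesis by blast
      qed
    next
      case False
      have "(x,0) \<in> Idx" using xh nd np_pos[of "ty x"] by (simp add: Idx_def)
      moreover have "aa (x,0) < t" "t < bb (x,0)" using False th t o1 nd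
        by (auto simp: aa_def bb_def lt_div_iff div_lt_iff)
      ultimately show ?thesis by blast
    qed
  qed
qed

lemma special_F: assumes "dbl" shows "F (2 / h) = (real (nxt 2) + 1) / h"
proof -
  have "slot (2 / h) = 2" "off (2 / h) = 0" using slot_eq[of 2 "2 / h"] hne by auto
  moreover have "ty 2 = FF" using dbl_ok assms by blast
  ultimately show ?thesis by (simp add: F_def)
qed

lemma no_int_between: fixes N :: int and a :: nat and r :: real
  assumes "real a < r" "r < real a + 1" "r = of_int N" shows False
proof -
  have "int a < N" using assms by linarith
  moreover have "N < int a + 1" using assms by linarith
  ultimately show False by linarith
qed

lemma arc_inj:
  assumes i: "i \<in> Idx" "aa i < t" "t < bb i" and j: "j \<in> Idx" "aa j < t'" "t' < bb j"
    and eq: "circ (aff (ee i) (cc i) t) = circ (aff (ee j) (cc j) t')"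
  shows "t = t'"
proof -
  have e: "circ (F t) = circ (F t')" using eq arc_main(1)[OF i] arc_main(1)[OF j] by simp
  have spec: False if g: "gd u" and d: "dbl" and c: "circ (F u) = circ (F (2 / h))" for u
  proof -
    obtain m :: int where m: "F u = F (2 / h) + of_int m" using c circ_eq_iff by blast
    then have "F u * h = real (nxt 2) + 1 + of_int m * h" using special_F[OF d] hne by (simp add: field_simps)
    then have "F u * h = of_int (int (nxt 2) + 1 + m * int h)" by simp
    then show False using no_int_between gd_F[OF g] by blast
  qed
  show ?thesis
    using arc_main(2)[OF i] arc_main(2)[OF j]
  proof (elim disjE)
    assume "gd t" "gd t'" then show ?thesis using F_inj e by blast
  next
    assume "gd t" "dbl \<and> j = (1,0) \<and> t' = 2 / h" then show ?thesis using spec e by blast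
  next
    assume "dbl \<and> i = (1,0) \<and> t = 2 / h" "gd t'" then show ?thesis using spec e by metis
  next
    assume "dbl \<and> i = (1,0) \<and> t = 2 / h" "dbl \<and> j = (1,0) \<and> t' = 2 / h" then show ?thesis by simp
  qed
qed

lemma aff_right_end:
  assumes p: "p < h" "\<not> (dbl \<and> p = 2)" "\<not> (dbl \<and> p = 1)"
  shows "(p, np (ty p) - 1) \<in> Idx" "bb (p, np (ty p) - 1) = (real p + 1) / h"
    "aff (ee (p, np (ty p) - 1)) (cc (p, np (ty p) - 1)) ((real p + 1) / h) = (real (nxt p) + vval (ty p) (cs p)) / h"
proof -
  show "(p, np (ty p) - 1) \<in> Idx" using p np_pos[of "ty p"] by (simp add: Idx_def)
  show "bb (p, np (ty p) - 1) = (real p + 1) / h" using p by (cases "ty p") (auto simp: bb_def)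
  show "aff (ee (p, np (ty p) - 1)) (cc (p, np (ty p) - 1)) ((real p + 1) / h) = (real (nxt p) + vval (ty p) (cs p)) / h"
    using hne by (cases "ty p") (auto simp: aff_def ee_def cc_def field_simps)
qed

lemma aff_dbl_end:
  assumes "dbl"
  shows "bb (1,0) = 3 / h" "circ (aff (ee (1,0)) (cc (1,0)) (3 / h)) = circ ((real (nxt 2) + vval (ty 2) (cs 2)) / h)"
proof -
  have ty: "ty 1 = FF" "ty 2 = FF" using dbl_ok assms by auto
  show "bb (1,0) = 3 / h" using bb_dbl assms by simp
  have a: "aff (ee (1,0)) (cc (1,0)) (3 / h) = (real (nxt 1) - 1) / h"
    using ty hne by (simp add: aff_def ee_def cc_def field_simps)
  show "circ (aff (ee (1,0)) (cc (1,0)) (3 / h)) = circ ((real (nxt 2) + vval (ty 2) (cs 2)) / h)"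
  proof (cases "nxt 1 = nxt 2 + 1")
    case True
    then show ?thesis using a ty by simp
  next
    case False
    then have "nxt 2 + 1 = h" "nxt 1 = 0" using dbl_nxt assms by auto
    then have r: "real (nxt 2) = real h - 1" "real (nxt 1) = 0" by linarith+
    have "(real (nxt 1) - 1) / h = (real (nxt 2) + vval (ty 2) (cs 2)) / h + of_int (-1)"
      using r ty hne by (simp add: field_simps)
    then show ?thesis using a circ_add_int by metis
  qed
qed

lemma aff_left_end:
  assumes y: "y < h" "\<not> (dbl \<and> y = 2)"
  shows "(y, 0) \<in> Idx" "aa (y,0) = real y / h"
    "aff (ee (y,0)) (cc (y,0)) (real y / h) = (real (nxt y) + wval (ty y) (cs y)) / h"
proof -
  show "(y, 0) \<in> Idx" using y np_pos[of "ty y"] by (simp add: Idx_def)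
  show "aa (y,0) = real y / h" by (simp add: aa_def)
  show "aff (ee (y,0)) (cc (y,0)) (real y / h) = (real (nxt y) + wval (ty y) (cs y)) / h"
    using hne by (cases "ty y") (auto simp: aff_def ee_def cc_def field_simps)
qed


definition pc :: "real \<Rightarrow> nat \<times> nat" where
  "pc t = (if dbl \<and> (slot t = 1 \<or> slot t = 2) then (1,0)
           else (slot t, if np (ty (slot t)) = 2 \<and> cs (slot t) < off t then 1 else 0))"

lemma arc_pc: assumes i: "i \<in> Idx" and t: "aa i < t" "t < bb i" shows "pc t = i"
  using i
proof (cases rule: Idx_cases)
  case (single x)
  have th: "real x < t * h" "t * h < real x + 1" using t single by (auto simp: lt_div_iff div_lt_iff)
  have so: "slot t = x" using slot_eq th by auto
  have "\<not> (dbl \<and> (x = 1 \<or> x = 2))" using single by auto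
  then show ?thesis using so single by (auto simp: pc_def)
next
  case (left x)
  have th: "real x < t * h" "t * h < real x + cs x" using t left by (auto simp: lt_div_iff div_lt_iff)
  have so: "slot t = x" "off t = t * h - x" using slot_eq th cs1[of x] by auto
  have "\<not> (dbl \<and> (x = 1 \<or> x = 2))" using left dbl_ok by auto
  then show ?thesis using so left th by (auto simp: pc_def)
next
  case (right x)
  have th: "real x + cs x < t * h" "t * h < real x + 1" using t right by (auto simp: lt_div_iff div_lt_iff)
  have so: "slot t = x" "off t = t * h - x" using slot_eq th cs0[of x] by auto
  have "\<not> (dbl \<and> (x = 1 \<or> x = 2))" using right dbl_ok by auto
  then show ?thesis using so right th by (auto simp: pc_def)
next
  case dblc
  have th: "1 < t * h" "t * h < 3" using t dblc by (auto simp: lt_div_iff div_lt_iff)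
  have "slot t = 1 \<or> slot t = 2"
  proof (cases "t * h < 2")
    case True then show ?thesis using slot_eq[of 1 t] th by auto
  next
    case False then show ?thesis using slot_eq[of 2 t] th by auto
  qed
  then show ?thesis unfolding pc_def using dblc by auto
qed

lemma circ_step_ne: "circ ((real N + 1) / h) \<noteq> circ (real N / h)"
proof
  assume "circ ((real N + 1) / h) = circ (real N / h)"
  then obtain m :: int where m: "(real N + 1) / h = real N / h + of_int m" using circ_eq_iff by blast
  then have e: "1 / real h = of_int m" using hne by (simp add: field_simps)
  moreover have "0 < 1 / real h" "1 / real h < 1" using h3 hpos by auto
  ultimately have "0 < m" "m < 1" by simp_all
  then show False by simp
qed

lemma not_gd_cases: assumes "0 \<le> x" "x < 1" "\<not> gd x"
  shows "off x = 0 \<or> (np (ty (slot x)) = 2 \<and> off x = cs (slot x))"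
  using assms off_range[of x] by (auto simp: gd_def)

lemma cut_lemma:
  assumes x: "0 \<le> x" "x < 1" and no: "\<forall>i\<in>Idx. \<not> (aa i < x \<and> x < bb i)"
  shows "\<exists>i\<in>Idx. \<exists>j\<in>Idx. (bb i = x \<or> (x = 0 \<and> bb i = 1)) \<and> aa j = x \<and>
           circ (aff (ee i) (cc i) (bb i)) \<noteq> circ (aff (ee j) (cc j) (aa j))"
proof -
  have ng: "\<not> gd x" using gd_in_arc no by blast
  define y where "y = slot x"
  have yh: "y < h" using slot_lt x y_def by auto
  have xh: "x * h = real y + off x" using slot_off x y_def by auto
  have cases: "off x = 0 \<or> (np (ty y) = 2 \<and> off x = cs y)" using not_gd_cases[OF x ng] y_def by simp
  show ?thesis
  proof (cases "off x = 0")
    case True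
    then have xv: "x = real y / h" using xh hne by (simp add: field_simps)
    have nd: "\<not> (dbl \<and> y = 2)"
    proof
      assume d: "dbl \<and> y = 2"
      have "(1,0) \<in> Idx" using Idx10 d by blast
      moreover have "aa (1,0) < x" "x < bb (1,0)" using xv d bb_dbl hpos
        by (auto simp: aa_def divide_strict_right_mono)
      ultimately show False using no by blast
    qed
    define p where "p = (y + h - 1) mod h"
    have ph: "p < h" using h3 by (simp add: p_def)
    have pv: "(y \<ge> 1 \<and> p = y - 1) \<or> (y = 0 \<and> p = h - 1)"
    proof (cases "y = 0")
      case True then show ?thesis using h3 by (simp add: p_def)
    next
      case False
      then have "y + h - 1 = (y - 1) + h" using h3 by simp
      then have "p = (y - 1) mod h" using p_def by simp
      then show ?thesis using False yh by simp
    qed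
    have pny: "p \<noteq> y" using pv h3 by auto
    have AB: "nxt p \<noteq> nxt y" using nxt_inj ph yh pny by (auto simp: inj_on_def)
    have bk: "bok h (ty p) (ty y) (nxt p) (nxt y)" using bd_ok[OF yh nd] p_def by simp
    have neq: "circ ((real (nxt p) + vval (ty p) (cs p)) / h) \<noteq> circ ((real (nxt y) + wval (ty y) (cs y)) / h)"
      using bok_circ[of h "nxt p" "nxt y" "ty p" "ty y" "cs p" "cs y"] h3 nxt_lt ph yh AB bk cs0 cs1 by auto
    have jr: "(y,0) \<in> Idx" "aa (y,0) = x" "circ (aff (ee (y,0)) (cc (y,0)) (aa (y,0))) = circ ((real (nxt y) + wval (ty y) (cs y)) / h)"
      using aff_left_end[OF yh nd] xv by auto
    show ?thesis
    proof (cases "dbl \<and> p = 2")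
      case True
      have "(1,0) \<in> Idx" using Idx10 True by blast
      moreover have "bb (1,0) = x \<or> (x = 0 \<and> bb (1,0) = 1)"
      proof -
        have b3: "bb (1,0) = 3 / h" using bb_dbl True by blast
        have "y = 3 \<or> (y = 0 \<and> h = 3)" using pv True by auto
        then show ?thesis
        proof
          assume "y = 3" then show ?thesis using b3 xv by simp
        next
          assume "y = 0 \<and> h = 3" then show ?thesis using b3 xv by simp
        qed
      qed
      moreover have "circ (aff (ee (1,0)) (cc (1,0)) (bb (1,0))) = circ ((real (nxt p) + vval (ty p) (cs p)) / h)"
        using aff_dbl_end True by simp
      ultimately show ?thesis using jr neq by (intro bexI[of _ "(1,0)"] bexI[of _ "(y,0)"]) auto
    next
      case False
      have np1: "\<not> (dbl \<and> p = 1)" using pv nd h3 by auto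
      note R = aff_right_end[OF ph False np1]
      have "bb (p, np (ty p) - 1) = x \<or> (x = 0 \<and> bb (p, np (ty p) - 1) = 1)"
        using pv
      proof
        assume a: "1 \<le> y \<and> p = y - 1"
        then have "real p + 1 = real y" by (simp add: of_nat_diff)
        then show ?thesis using R(2) xv by simp
      next
        assume a: "y = 0 \<and> p = h - 1"
        then have "real p + 1 = real h" using h3 by (simp add: of_nat_diff)
        then show ?thesis using R(2) xv a hne by simp
      qed
      then show ?thesis using R jr neq by (intro bexI[of _ "(p, np (ty p) - 1)"] bexI[of _ "(y,0)"]) auto
    qed
  next
    case False
    then have c: "np (ty y) = 2" "off x = cs y" using cases by auto
    have nd: "\<not> (dbl \<and> y = 2)" using c dbl_ok by auto
    have i0: "(y,0) \<in> Idx" "(y,1) \<in> Idx" using yh c nd by (auto simp: Idx_def)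
    have xv: "x = (real y + cs y) / h" using xh c hne by (simp add: field_simps)
    have ab: "bb (y,0) = x" "aa (y,1) = x" using xv c by (auto simp: aa_def bb_def)
    have "ty y = TT \<or> ty y = IP" using c by (cases "ty y") auto
    then have "circ (aff (ee (y,0)) (cc (y,0)) x) \<noteq> circ (aff (ee (y,1)) (cc (y,1)) x)"
    proof
      assume tt: "ty y = TT"
      have "aff (ee (y,0)) (cc (y,0)) x = (real (nxt y) + 1) / h" "aff (ee (y,1)) (cc (y,1)) x = real (nxt y) / h"
        using tt xv hne by (auto simp: aff_def ee_def cc_def field_simps)
      then show ?thesis using circ_step_ne by simp
    next
      assume ip: "ty y = IP"
      have "aff (ee (y,0)) (cc (y,0)) x = real (nxt y) / h" "aff (ee (y,1)) (cc (y,1)) x = (real (nxt y) + 1) / h"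
        using ip xv hne by (auto simp: aff_def ee_def cc_def field_simps)
      then show ?thesis using circ_step_ne[of "nxt y"] by auto
    qed
    then show ?thesis using i0 ab by (intro bexI[of _ "(y,0)"] bexI[of _ "(y,1)"]) auto
  qed
qed

lemma cov_lemma: assumes "0 \<le> t" "t \<le> 1" shows "\<exists>i\<in>Idx. aa i \<le> t \<and> t \<le> bb i"
proof (cases "t = 1")
  case True
  define p where "p = h - 1"
  have ph: "p < h" using h3 by (simp add: p_def)
  show ?thesis
  proof (cases "dbl \<and> p = 2")
    case True
    have "(1,0) \<in> Idx" using Idx10 True by blast
    moreover have "bb (1,0) = 1" using True bb_dbl p_def h3 by auto
    moreover have "aa (1,0) \<le> 1" using arc_bounds[OF \<open>(1,0) \<in> Idx\<close>] calculation by auto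
    ultimately show ?thesis using \<open>t = 1\<close> by force
  next
    case False
    have np1: "\<not> (dbl \<and> p = 1)" using p_def h3 by auto
    note R = aff_right_end[OF ph False np1]
    have "bb (p, np (ty p) - 1) = 1" using R(2) p_def h3 hne by simp
    moreover have "aa (p, np (ty p) - 1) \<le> bb (p, np (ty p) - 1)" using arc_bounds[OF R(1)] by simp
    ultimately show ?thesis using \<open>t = 1\<close> R(1) by force
  qed
next
  case False
  then have t1: "t < 1" using assms by simp
  show ?thesis
  proof (cases "gd t")
    case True
    then show ?thesis using gd_in_arc by force
  next
    case False
    define y where "y = slot t"
    have yh: "y < h" using slot_lt assms t1 y_def by auto
    have th: "t * h = real y + off t" using slot_off assms y_def by auto
    have cases: "off t = 0 \<or> (np (ty y) = 2 \<and> off t = cs y)" using not_gd_cases[OF assms(1) t1 False] y_def by simp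
    show ?thesis
    proof (cases "off t = 0")
      case True
      then have tv: "t = real y / h" using th hne by (simp add: field_simps)
      show ?thesis
      proof (cases "dbl \<and> y = 2")
        case True
        have "(1,0) \<in> Idx" using Idx10 True by blast
        moreover have "aa (1,0) \<le> t" "t \<le> bb (1,0)" using tv True bb_dbl hpos
          by (auto simp: aa_def divide_right_mono)
        ultimately show ?thesis by blast
      next
        case False
        note L = aff_left_end[OF yh False]
        have "aa (y,0) \<le> bb (y,0)" using arc_bounds[OF L(1)] by simp
        then show ?thesis using L tv by force
      qed
    next
      case False
      then have c: "np (ty y) = 2" "off t = cs y" using cases by auto
      have nd: "\<not> (dbl \<and> y = 2)" using c dbl_ok by auto
      have i0: "(y,0) \<in> Idx" using yh c nd by (auto simp: Idx_def)
      have "bb (y,0) = t" using th c hne by (simp add: bb_def field_simps)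
      moreover have "aa (y,0) \<le> bb (y,0)" using arc_bounds[OF i0] by simp
      ultimately show ?thesis using i0 by force
    qed
  qed
qed

lemma finite_Idx: "finite Idx"
proof -
  have "Idx \<subseteq> {..<h} \<times> {..<2}" unfolding Idx_def using np_le by (auto intro: less_le_trans)
  then show ?thesis by (rule finite_subset) simp
qed

theorem cet: "CET (card Idx) (card {i\<in>Idx. ee i}) T D"
  unfolding D_def
proof (rule CET_from_arcs[OF finite_Idx])
  show "\<And>i. i \<in> Idx \<Longrightarrow> 0 \<le> aa i \<and> aa i < bb i \<and> bb i \<le> 1" using arc_bounds by auto
  show "\<And>i j. i \<in> Idx \<Longrightarrow> j \<in> Idx \<Longrightarrow> i \<noteq> j \<Longrightarrow> {aa i<..<bb i} \<inter> {aa j<..<bb j} = {}"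
  proof
    fix i j assume ij: "i \<in> Idx" "j \<in> Idx" "i \<noteq> j"
    show "{aa i<..<bb i} \<inter> {aa j<..<bb j} \<subseteq> {}"
    proof
      fix t assume "t \<in> {aa i<..<bb i} \<inter> {aa j<..<bb j}"
      then have "pc t = i" "pc t = j" using arc_pc[OF ij(1)] arc_pc[OF ij(2)] by auto
      then show "t \<in> {}" using ij by simp
    qed
  qed simp
  show "\<And>t. 0 \<le> t \<Longrightarrow> t \<le> 1 \<Longrightarrow> \<exists>i\<in>Idx. aa i \<le> t \<and> t \<le> bb i" using cov_lemma by blast
  show "\<And>i t. i \<in> Idx \<Longrightarrow> aa i < t \<Longrightarrow> t < bb i \<Longrightarrow> T (circ t) = circ (aff (ee i) (cc i) t)"
  proof -
    fix i t assume a: "i \<in> Idx" "aa i < t" "t < bb i"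
    have "0 \<le> t" "t < 1" using arc_bounds[OF a(1)] a by auto
    then show "T (circ t) = circ (aff (ee i) (cc i) t)" using T_circ arc_main(1)[OF a] by simp
  qed
  show "\<And>i j t t'. i \<in> Idx \<Longrightarrow> j \<in> Idx \<Longrightarrow> aa i < t \<Longrightarrow> t < bb i \<Longrightarrow> aa j < t' \<Longrightarrow> t' < bb j
          \<Longrightarrow> circ (aff (ee i) (cc i) t) = circ (aff (ee j) (cc j) t') \<Longrightarrow> t = t'"
    using arc_inj by blast
  show "\<And>x. 0 \<le> x \<Longrightarrow> x < 1 \<Longrightarrow> \<forall>i\<in>Idx. \<not> (aa i < x \<and> x < bb i) \<Longrightarrow>
          \<exists>i\<in>Idx. \<exists>j\<in>Idx. (bb i = x \<or> x = 0 \<and> bb i = 1) \<and> aa j = x \<and>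
            circ (aff (ee i) (cc i) (bb i)) \<noteq> circ (aff (ee j) (cc j) (aa j))"
    using cut_lemma by blast
qed

end



fun ev :: "sty \<Rightarrow> real" where
  "ev Id = 1" | "ev TT = 1" | "ev FF = -1" | "ev IP = -1"
fun dv :: "sty \<Rightarrow> real \<Rightarrow> real" where
  "dv Id c = 0" | "dv TT c = - c" | "dv FF c = 0" | "dv IP c = c"

lemma gmap_aff: assumes "np s = 2 \<Longrightarrow> w \<noteq> c"
  shows "\<exists>m::int. gmap s c w = ev s * w + dv s c + of_int m"
proof (cases s)
  case Id then show ?thesis by (auto intro: exI[of _ 0])
next
  case TT then show ?thesis
    by (cases "w < c") (auto intro: exI[of _ 0] exI[of _ 1])
next
  case FF then show ?thesis by (auto intro: exI[of _ 1])
next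
  case IP then show ?thesis
    by (cases "w < c") (auto intro: exI[of _ 0] exI[of _ 1])
qed

lemma ev_if: "ev s = (if isflip s then -1 else 1)" by (cases s) auto

lemma mod_add_inj:
  fixes j m m' h :: nat
  assumes "m < h" "m' < h" "(j + m) mod h = (j + m') mod h"
  shows "m = m'"
proof -
  define r where "r = j mod h"
  have hp: "0 < h" using assms by simp
  have r: "r < h" using hp by (simp add: r_def)
  have e1: "(j + m) mod h = (r + m) mod h" by (simp add: r_def mod_add_left_eq)
  have e2: "(j + m') mod h = (r + m') mod h" by (simp add: r_def mod_add_left_eq)
  have f: "(r + k) mod h = (if r + k < h then r + k else r + k - h)" if "k < h" for k
  proof (cases "r + k < h")
    case True then show ?thesis by simp
  next
    case False
    then have "r + k - h < h" using r that by linarith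
    moreover have "(r + k) mod h = (r + k - h) mod h" using False by (simp add: le_mod_geq)
    ultimately show ?thesis using False by simp
  qed
  show ?thesis using assms e1 e2 f[OF assms(1)] f[OF assms(2)] r by (auto split: if_splits)
qed

locale slotdyn = slotcet +
  fixes th :: real and xs :: nat
  assumes th_irr: "th \<notin> \<rat>" and th0: "0 < th" and th1: "th < 1"
    and cs_eq: "\<And>x. cs x = (if x = xs then th else 1/2)"
    and xs_h: "xs < h" and xs_ty: "ty xs = TT \<or> ty xs = IP"
    and cyc: "bij_betw (\<lambda>i. (nxt ^^ i) 0) {..<h} {..<h}" and cyc_h: "(nxt ^^ h) 0 = 0"
    and refl_even: "even (card {x. x < h \<and> isflip (ty x)})"
begin

definition pos :: "nat \<Rightarrow> nat" where "pos j = (nxt ^^ j) 0"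

fun W :: "nat \<Rightarrow> real" where
  "W 0 = th / 3"
| "W (Suc j) = gmap (ty (pos j)) (cs (pos j)) (W j)"

definition good :: "real \<Rightarrow> bool" where
  "good w \<longleftrightarrow> (\<exists>k::int. \<exists>r\<in>\<rat>. w = of_int k / 3 * th + r \<and> \<not> 3 dvd k)"

lemma pos_Suc: "pos (Suc j) = nxt (pos j)" by (simp add: pos_def)

lemma pos_lt: "pos j < h"
proof (induction j)
  case 0 then show ?case using h3 by (simp add: pos_def)
next
  case (Suc j) then show ?case using nxt_lt by (simp add: pos_Suc)
qed

lemma pos_period: "pos (j + h) = pos j"
  by (simp add: pos_def funpow_add cyc_h)

lemma pos_period_k: "pos (j + h * k) = pos j"
proof (induction k)
  case 0 then show ?case by simp
next
  case (Suc k)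
  have "pos (j + h * Suc k) = pos ((j + h * k) + h)" by (simp add: algebra_simps)
  then show ?case using pos_period Suc by simp
qed

lemma good_not_rat: assumes "good w" shows "w \<notin> \<rat>"
proof
  assume w: "w \<in> \<rat>"
  obtain k :: int and r where kr: "r \<in> \<rat>" "w = of_int k / 3 * th + r" "\<not> 3 dvd k"
    using assms unfolding good_def by blast
  have k0: "of_int k / 3 \<noteq> (0::real)" using kr(3) by auto
  have "th = (w - r) / (of_int k / 3)" using kr k0 by (simp add: field_simps)
  moreover have "(w - r) / (of_int k / 3) \<in> \<rat>" using w kr(1) by (intro Rats_divide Rats_diff) auto
  ultimately show False using th_irr by simp
qed

lemma good_ne_th: assumes "good w" shows "w \<noteq> th"
proof
  assume w: "w = th"
  obtain k :: int and r where kr: "r \<in> \<rat>" "w = of_int k / 3 * th + r" "\<not> 3 dvd k"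
    using assms unfolding good_def by blast
  have k0: "of_int k / 3 - 1 \<noteq> (0::real)"
  proof
    assume "of_int k / 3 - 1 = (0::real)"
    then have "of_int k = (3::real)" by simp
    then have "k = 3" by (metis of_int_eq_numeral_iff)
    then show False using kr(3) by simp
  qed
  have "th = - r / (of_int k / 3 - 1)" using kr w k0 by (simp add: field_simps)
  moreover have "- r / (of_int k / 3 - 1) \<in> \<rat>" using kr(1) by (intro Rats_divide Rats_minus_iff[THEN iffD2] Rats_diff) auto
  ultimately show False using th_irr by simp
qed

lemma good_ne_cs: assumes "good w" shows "w \<noteq> cs x"
proof (cases "x = xs")
  case True then show ?thesis using good_ne_th assms by (simp add: cs_eq)
next
  case False
  have "(1/2::real) \<in> \<rat>" by simp
  moreover have "w \<notin> \<rat>" using good_not_rat assms by blast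
  ultimately have "w \<noteq> 1/2" by metis
  then show ?thesis using False by (simp add: cs_eq)
qed

lemma good_affine:
  assumes g: "good w" and e: "e = 1 \<or> e = -1" and q: "d = of_int q * th + r" "r \<in> \<rat>"
  shows "good (e * w + d + of_int m)"
proof -
  obtain k :: int and r0 where kr: "r0 \<in> \<rat>" "w = of_int k / 3 * th + r0" "\<not> 3 dvd k"
    using g unfolding good_def by blast
  from e show ?thesis
  proof
    assume e1: "e = 1"
    have "e * w + d + of_int m = of_int (k + 3 * q) / 3 * th + (r0 + r + of_int m)"
      using e1 kr q by (simp add: field_simps)
    moreover have "r0 + r + of_int m \<in> \<rat>" using kr(1) q(2) by auto
    moreover have "\<not> 3 dvd (k + 3 * q)" using kr(3) by presburger
    ultimately show ?thesis unfolding good_def by blast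
  next
    assume e1: "e = -1"
    have "e * w + d + of_int m = of_int (- k + 3 * q) / 3 * th + (- r0 + r + of_int m)"
      using e1 kr q by (simp add: field_simps)
    moreover have "- r0 + r + of_int m \<in> \<rat>" using kr(1) q(2) by auto
    moreover have "\<not> 3 dvd (- k + 3 * q)" using kr(3) by presburger
    ultimately show ?thesis unfolding good_def by blast
  qed
qed

lemma dv_form: "\<exists>q::int. \<exists>r\<in>\<rat>. dv s (cs x) = of_int q * th + r"
proof -
  have "\<exists>q::int. \<exists>r\<in>\<rat>. cs x = of_int q * th + r"
  proof (cases "x = xs")
    case True then show ?thesis by (intro exI[of _ 1] bexI[of _ 0]) (auto simp: cs_eq)
  next
    case False then show ?thesis by (intro exI[of _ 0] bexI[of _ "1/2"]) (auto simp: cs_eq)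
  qed
  then obtain q :: int and r where qr: "r \<in> \<rat>" "cs x = of_int q * th + r" by blast
  show ?thesis
  proof (cases s)
    case Id then show ?thesis by (auto intro!: exI[of _ 0])
  next
    case TT then show ?thesis using qr by (intro exI[of _ "-q"] bexI[of _ "-r"]) auto
  next
    case FF then show ?thesis by (auto intro!: exI[of _ 0])
  next
    case IP then show ?thesis using qr by (intro exI[of _ q] bexI[of _ r]) auto
  qed
qed

lemma ev_pm: "ev s = 1 \<or> ev s = -1" by (cases s) auto

lemma W_good: "good (W j) \<and> 0 < W j \<and> W j < 1"
proof (induction j)
  case 0
  have "good (th / 3)" unfolding good_def by (intro exI[of _ 1] bexI[of _ 0]) auto
  then show ?case using th0 th1 by simp
next
  case (Suc j)
  let ?s = "ty (pos j)" and ?c = "cs (pos j)"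
  have ne: "W j \<noteq> ?c" using good_ne_cs Suc by blast
  obtain m :: int where m: "gmap ?s ?c (W j) = ev ?s * W j + dv ?s ?c + of_int m"
    using gmap_aff ne by blast
  obtain q :: int and r where qr: "r \<in> \<rat>" "dv ?s ?c = of_int q * th + r" using dv_form by blast
  have "good (gmap ?s ?c (W j))" unfolding m using good_affine[OF _ ev_pm qr(2,1)] Suc by blast
  moreover have "0 < gmap ?s ?c (W j) \<and> gmap ?s ?c (W j) < 1"
    using gmap_range[of "W j" ?c ?s] Suc ne cs0 cs1 by auto
  ultimately show ?case by simp
qed


definition p0 :: complex where "p0 = circ (th / (3 * h))"

lemma W_props: "good (W j)" "0 < W j" "W j < 1" using W_good by auto

lemma T_step: assumes "x < h" "0 < w" "w < 1"
  shows "T (circ ((real x + w) / h)) = circ ((real (nxt x) + gmap (ty x) (cs x) w) / h)"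
proof -
  let ?t = "(real x + w) / h"
  have th: "?t * h = real x + w" using hne by simp
  have so: "slot ?t = x" "off ?t = w" using slot_eq[of x ?t] th assms by auto
  have t01: "0 \<le> ?t" "?t < 1"
  proof -
    show "0 \<le> ?t" using assms hpos by simp
    have "real x + w < h" using assms by linarith
    then show "?t < 1" using hpos by (simp add: divide_less_eq)
  qed
  show ?thesis using T_circ[OF t01] so by (simp add: F_def)
qed

lemma orbit_pt: "(T ^^ j) p0 = circ ((real (pos j) + W j) / h)"
proof (induction j)
  case 0 then show ?case by (simp add: p0_def pos_def)
next
  case (Suc j)
  have "(T ^^ Suc j) p0 = T (circ ((real (pos j) + W j) / h))" using Suc by simp
  also have "\<dots> = circ ((real (pos (Suc j)) + W (Suc j)) / h)"
    using T_step[OF pos_lt W_props(2,3)] by (simp add: pos_Suc)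
  finally show ?case .
qed

lemma orbit_in_D: "(T ^^ j) p0 \<in> D"
proof -
  let ?t = "(real (pos j) + W j) / h"
  have th: "?t * h = real (pos j) + W j" using hne by simp
  have so: "slot ?t = pos j" "off ?t = W j" using slot_eq[of "pos j" ?t] th W_props(2,3)[of j] by auto
  have t01: "0 \<le> ?t" "?t < 1"
  proof -
    have "0 < W j" by (rule W_props(2))
    then show "0 \<le> ?t" using hpos by simp
    have "real (pos j) + W j < h" using pos_lt[of j] W_props(3)[of j] by linarith
    then show "?t < 1" using hpos by (simp add: divide_less_eq)
  qed
  have "gd ?t" unfolding gd_def using t01 so W_props good_ne_cs by auto
  then obtain i where "i \<in> Idx" "aa i < ?t" "?t < bb i" using gd_in_arc by blast
  then have "circ ?t \<in> D" unfolding D_def by (intro UN_I[of i]) auto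
  then show ?thesis using orbit_pt by simp
qed

lemma orbit_sub: "(T ^^ j) p0 \<in> orbit T D p0"
proof -
  have "in_dom_iter T D j p0" unfolding in_dom_iter_def using orbit_in_D by blast
  then show ?thesis unfolding orbit_def by blast
qed

fun Dv :: "nat \<Rightarrow> nat \<Rightarrow> real" where
  "Dv j 0 = 0"
| "Dv j (Suc L) = ev (ty (pos (j + L))) * Dv j L + dv (ty (pos (j + L))) (cs (pos (j + L)))"

lemma W_window: "\<exists>m::int. W (j + L) = (\<Prod>i<L. ev (ty (pos (j + i)))) * W j + Dv j L + of_int m"
proof (induction L)
  case 0 then show ?case by (auto intro: exI[of _ 0])
next
  case (Suc L)
  then obtain m :: int where m: "W (j + L) = (\<Prod>i<L. ev (ty (pos (j + i)))) * W j + Dv j L + of_int m" by blast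
  let ?s = "ty (pos (j + L))" and ?c = "cs (pos (j + L))"
  have ne: "W (j + L) \<noteq> ?c" using good_ne_cs W_props by blast
  obtain m1 :: int where m1: "gmap ?s ?c (W (j + L)) = ev ?s * W (j + L) + dv ?s ?c + of_int m1"
    using gmap_aff ne by blast
  have "\<exists>m2::int. ev ?s * of_int m = of_int m2" using ev_pm[of ?s]
    by (elim disjE) (auto intro!: exI[of _ m] exI[of _ "-m"])
  then obtain m2 :: int where m2: "ev ?s * of_int m = of_int m2" by blast
  have "W (j + Suc L) = gmap ?s ?c (W (j + L))" by simp
  also have "\<dots> = ev ?s * ((\<Prod>i<L. ev (ty (pos (j + i)))) * W j + Dv j L + of_int m) + dv ?s ?c + of_int m1"
    using m1 m by simp
  also have "\<dots> = (\<Prod>i<Suc L. ev (ty (pos (j + i)))) * W j + Dv j (Suc L) + of_int (m2 + m1)"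
    using m2 by (simp add: algebra_simps)
  finally show ?case by blast
qed

lemma pos_shift_inj: "inj_on (\<lambda>m. pos (j + m)) {..<h}"
proof (rule inj_onI)
  fix m m' assume mm: "m \<in> {..<h}" "m' \<in> {..<h}" "pos (j + m) = pos (j + m')"
  have per: "pos n = pos (n mod h)" for n
    using pos_period_k[of "n mod h" "n div h"] by simp
  have "pos ((j + m) mod h) = pos ((j + m') mod h)" using mm(3) per[of "j + m"] per[of "j + m'"] by simp
  moreover have "(j + m) mod h < h" "(j + m') mod h < h" using h3 by auto
  ultimately have "(j + m) mod h = (j + m') mod h" using cyc unfolding bij_betw_def inj_on_def pos_def by blast
  then show "m = m'" using mod_add_inj mm by auto
qed

lemma pos_shift_bij: "bij_betw (\<lambda>m. pos (j + m)) {..<h} {..<h}"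
proof -
  have inj: "inj_on (\<lambda>m. pos (j + m)) {..<h}" by (rule pos_shift_inj)
  have sub: "(\<lambda>m. pos (j + m)) ` {..<h} \<subseteq> {..<h}" using pos_lt by auto
  have "card ((\<lambda>m. pos (j + m)) ` {..<h}) = h" using card_image[OF inj] by simp
  then have "(\<lambda>m. pos (j + m)) ` {..<h} = {..<h}" using sub by (simp add: card_subset_eq)
  then show ?thesis using inj by (simp add: bij_betw_def)
qed

lemma E_one: "(\<Prod>i<h. ev (ty (pos (j + i)))) = 1"
proof -
  have "(\<Prod>i<h. ev (ty (pos (j + i)))) = (\<Prod>x<h. ev (ty x))"
    using prod.reindex_bij_betw[OF pos_shift_bij[of j], of "\<lambda>x. ev (ty x)"] by simp
  also have "\<dots> = (\<Prod>x<h. if isflip (ty x) then -1 else 1)" by (simp add: ev_if)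
  also have "\<dots> = (-1) ^ card ({..<h} \<inter> {x. isflip (ty x)})"
    by (simp add: prod.If_cases)
  also have "{..<h} \<inter> {x. isflip (ty x)} = {x. x < h \<and> isflip (ty x)}" by auto
  finally show ?thesis using refl_even by simp
qed

lemma Dv_period: "Dv (j + h * k) L = Dv j L"
proof (induction L)
  case 0 then show ?case by simp
next
  case (Suc L)
  have "pos (j + h * k + L) = pos (j + L)" using pos_period_k[of "j + L" k] by (simp add: algebra_simps)
  then show ?case using Suc by simp
qed

lemma Dv_form: assumes "L \<le> h"
  shows "\<exists>q::int. \<exists>r\<in>\<rat>. Dv j L = of_int q * th + r \<and> (q = 1 \<or> q = -1 \<or> q = 0) \<and>
            (q \<noteq> 0 \<longleftrightarrow> (\<exists>m<L. pos (j + m) = xs))"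
  using assms
proof (induction L)
  case 0 then show ?case by (auto intro!: exI[of _ 0] bexI[of _ 0])
next
  case (Suc L)
  then obtain q :: int and r where qr: "r \<in> \<rat>" "Dv j L = of_int q * th + r" "q = 1 \<or> q = -1 \<or> q = 0"
      "q \<noteq> 0 \<longleftrightarrow> (\<exists>m<L. pos (j + m) = xs)" by auto
  let ?x = "pos (j + L)"
  let ?e = "ev (ty ?x)"
  have e: "?e = 1 \<or> ?e = -1" by (rule ev_pm)
  have "\<exists>qe::int. ?e = of_int qe \<and> (qe = 1 \<or> qe = -1)" using e
    by (elim disjE) (auto intro!: exI[of _ 1] exI[of _ "-1"])
  then obtain qe :: int where qe: "?e = of_int qe" "qe = 1 \<or> qe = -1" by blast
  show ?case
  proof (cases "?x = xs")
    case True
    have "\<not> (\<exists>m<L. pos (j + m) = xs)"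
    proof
      assume "\<exists>m<L. pos (j + m) = xs"
      then obtain m where "m < L" "pos (j + m) = pos (j + L)" using True by auto
      then show False using pos_shift_inj[of j] Suc.prems unfolding inj_on_def by fastforce
    qed
    then have q0: "q = 0" using qr(4) by blast
    have csx: "cs ?x = th" using True by (simp add: cs_eq)
    have "dv (ty ?x) (cs ?x) = th \<or> dv (ty ?x) (cs ?x) = - th" using xs_ty True csx by auto
    then show ?thesis
    proof
      assume d: "dv (ty ?x) (cs ?x) = th"
      have "Dv j (Suc L) = of_int 1 * th + ?e * r" using d q0 qr(2) by simp
      moreover have "?e * r \<in> \<rat>" using qr(1) qe by simp
      ultimately show ?thesis using True by (intro exI[of _ 1] bexI[of _ "?e * r"]) auto
    next
      assume d: "dv (ty ?x) (cs ?x) = - th"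
      have "Dv j (Suc L) = of_int (-1) * th + ?e * r" using d q0 qr(2) by simp
      moreover have "?e * r \<in> \<rat>" using qr(1) qe by simp
      ultimately show ?thesis using True by (intro exI[of _ "-1"] bexI[of _ "?e * r"]) auto
    qed
  next
    case False
    have csx: "cs ?x = 1/2" using False by (simp add: cs_eq)
    have hr: "(1/2::real) \<in> \<rat>" by simp
    have dr: "dv (ty ?x) (cs ?x) \<in> \<rat>" unfolding csx using hr by (cases "ty ?x") auto
    have "Dv j (Suc L) = of_int (qe * q) * th + (?e * r + dv (ty ?x) (cs ?x))"
      using qr(2) qe(1) by (simp add: algebra_simps)
    moreover have "?e * r + dv (ty ?x) (cs ?x) \<in> \<rat>" using qr(1) dr qe by simp
    moreover have "qe * q = 1 \<or> qe * q = -1 \<or> qe * q = 0" using qe(2) qr(3) by auto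
    moreover have "qe * q \<noteq> 0 \<longleftrightarrow> (\<exists>m<Suc L. pos (j + m) = xs)"
      using qr(4) qe(2) False less_Suc_eq by auto
    ultimately show ?thesis by blast
  qed
qed

lemma Dv_irr: "Dv j h \<notin> \<rat>"
proof
  assume D: "Dv j h \<in> \<rat>"
  obtain q :: int and r where qr: "r \<in> \<rat>" "Dv j h = of_int q * th + r" "q = 1 \<or> q = -1 \<or> q = 0"
      "q \<noteq> 0 \<longleftrightarrow> (\<exists>m<h. pos (j + m) = xs)" using Dv_form[of h j] by auto
  have "xs \<in> (\<lambda>m. pos (j + m)) ` {..<h}" using pos_shift_bij[of j] xs_h by (simp add: bij_betw_def)
  then have "\<exists>m<h. pos (j + m) = xs" by auto
  then have "q = 1 \<or> q = -1" using qr by auto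
  then have "th = (Dv j h - r) / of_int q" using qr(2) by auto
  moreover have "(Dv j h - r) / of_int q \<in> \<rat>" using D qr(1) by (intro Rats_divide Rats_diff) auto
  ultimately show False using th_irr by simp
qed

lemma W_iter: "\<exists>m::int. W (j + h * k) = W j + real k * Dv j h + of_int m"
proof (induction k)
  case 0 then show ?case by (auto intro: exI[of _ 0])
next
  case (Suc k)
  then obtain m :: int where m: "W (j + h * k) = W j + real k * Dv j h + of_int m" by blast
  obtain m1 :: int where m1: "W ((j + h * k) + h) = (\<Prod>i<h. ev (ty (pos ((j + h * k) + i)))) * W (j + h * k) + Dv (j + h * k) h + of_int m1"
    using W_window by blast
  have "W (j + h * Suc k) = W ((j + h * k) + h)" by (simp add: algebra_simps)
  also have "\<dots> = W (j + h * k) + Dv j h + of_int m1" using m1 E_one Dv_period by simp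
  also have "\<dots> = W j + real (Suc k) * Dv j h + of_int (m + m1)" using m by (simp add: algebra_simps)
  finally show ?case by blast
qed

lemma slot_dense:
  assumes y: "y < h" and b: "0 < \<beta>" "\<beta> < 1" and e: "0 < \<epsilon>"
  shows "\<exists>n. pos n = y \<and> \<bar>W n - \<beta>\<bar> < \<epsilon>"
proof -
  have "y \<in> (\<lambda>i. (nxt ^^ i) 0) ` {..<h}" using cyc y by (simp add: bij_betw_def)
  then obtain j where j: "j < h" "pos j = y" unfolding pos_def by auto
  define \<epsilon>' where "\<epsilon>' = min \<epsilon> (min \<beta> (1 - \<beta>))"
  have e': "0 < \<epsilon>'" using e b by (simp add: \<epsilon>'_def)
  obtain hh kk :: int where hk: "0 < kk" "\<bar>of_int kk * Dv j h - of_int hh - (\<beta> - W j)\<bar> < \<epsilon>'"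
    by (rule sequence_of_fractional_parts_is_dense[OF Dv_irr e'])
  define k where "k = nat kk"
  have kk: "real k = of_int kk" using hk(1) by (simp add: k_def)
  obtain m :: int where m: "W (j + h * k) = W j + real k * Dv j h + of_int m" using W_iter by blast
  define v where "v = W j + real k * Dv j h - of_int hh"
  have v: "\<bar>v - \<beta>\<bar> < \<epsilon>'" using hk(2) kk by (simp add: v_def algebra_simps)
  have v01: "0 < v" "v < 1" using v by (auto simp: \<epsilon>'_def abs_less_iff)
  have "W (j + h * k) - v = of_int (m + hh)" using m by (simp add: v_def)
  moreover have "\<bar>W (j + h * k) - v\<bar> < 1" using v01 W_props[of "j + h * k"] by linarith
  ultimately have i: "of_int (m + hh) < (1::real)" "-1 < (of_int (m + hh) :: real)" by linarith+
  then have "m + hh < 1" "-1 < m + hh" by linarith+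
  then have "m + hh = 0" by linarith
  then have "W (j + h * k) = v" using \<open>W (j + h * k) - v = of_int (m + hh)\<close> by simp
  then have "\<bar>W (j + h * k) - \<beta>\<bar> < \<epsilon>" using v by (simp add: \<epsilon>'_def)
  moreover have "pos (j + h * k) = y" using pos_period_k j by simp
  ultimately show ?thesis by blast
qed

lemma pt_in_closure:
  assumes y: "y < h" and b: "0 < \<beta>" "\<beta> < 1"
  shows "circ ((real y + \<beta>) / h) \<in> closure (orbit T D p0)"
  unfolding closure_approachable
proof (intro allI impI)
  fix \<epsilon> :: real assume e: "0 < \<epsilon>"
  obtain \<delta> where d: "0 < \<delta>" "\<And>x'. dist x' ((real y + \<beta>) / h) < \<delta> \<Longrightarrow> dist (circ x') (circ ((real y + \<beta>) / h)) < \<epsilon>"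
    using isCont_circ[of "(real y + \<beta>) / h"] e unfolding continuous_at_eps_delta by blast
  have dh: "0 < \<delta> * h" using d hpos by simp
  obtain n where n: "pos n = y" "\<bar>W n - \<beta>\<bar> < \<delta> * h" using slot_dense[OF y b dh] by blast
  have "dist ((real y + W n) / h) ((real y + \<beta>) / h) = \<bar>W n - \<beta>\<bar> / h"
    using hpos by (simp add: dist_real_def diff_divide_distrib[symmetric])
  also have "\<dots> < \<delta>" using n(2) hpos by (simp add: divide_less_eq)
  finally have "dist (circ ((real y + W n) / h)) (circ ((real y + \<beta>) / h)) < \<epsilon>" using d(2) by blast
  moreover have "circ ((real y + W n) / h) \<in> orbit T D p0" using orbit_sub[of n] orbit_pt n(1) by simp
  ultimately show "\<exists>z\<in>orbit T D p0. dist z (circ ((real y + \<beta>) / h)) < \<epsilon>" by blast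
qed

lemma T_in_S1: "T z \<in> S1" by (simp add: T_def)

lemma D_sub_S1: "D \<subseteq> S1" unfolding D_def by auto

lemma orbit_S1: "orbit T D p0 \<subseteq> S1"
proof
  fix z assume "z \<in> orbit T D p0"
  then consider (f) k where "in_dom_iter T D k p0" "z = (T ^^ k) p0"
    | (b) k where "in_dom_iter T D k z" "(T ^^ k) z = p0" unfolding orbit_def by blast
  then show "z \<in> S1"
  proof cases
    case (f k) then show ?thesis using orbit_in_D D_sub_S1 by auto
  next
    case (b k)
    show ?thesis
    proof (cases k)
      case 0 then show ?thesis using b by (simp add: p0_def)
    next
      case (Suc k')
      then have "(T ^^ 0) z \<in> D" using b(1) unfolding in_dom_iter_def by blast
      then show ?thesis using D_sub_S1 by auto
    qed
  qed
qed

theorem trans: "transitive T D"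
  unfolding transitive_def
proof (intro bexI[of _ p0])
  show "p0 \<in> S1" by (simp add: p0_def)
  show "closure (orbit T D p0) = S1"
  proof
    have "closed S1" by (simp add: S1_def)
    then show "closure (orbit T D p0) \<subseteq> S1" using orbit_S1 by (simp add: closure_minimal)
    show "S1 \<subseteq> closure (orbit T D p0)"
    proof
      fix z assume "z \<in> S1"
      then obtain t where t: "0 \<le> t" "t < 1" "circ t = z" using circ_surj by blast
      define y where "y = slot t"
      have yh: "y < h" using slot_lt t y_def by auto
      have tv: "t = (real y + off t) / h" using slot_off[OF t(1)] hne y_def by (simp add: field_simps)
      show "z \<in> closure (orbit T D p0)"
      proof (cases "off t = 0")
        case False
        then have "0 < off t" "off t < 1" using off_range[OF t(1)] by auto
        then have "circ ((real y + off t) / h) \<in> closure (orbit T D p0)" by (rule pt_in_closure[OF yh])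
        then show ?thesis using tv t(3) by simp
      next
        case True
        define s where "s n = circ ((real y + 1 / real (Suc (Suc n))) / h)" for n
        have sin: "s n \<in> closure (orbit T D p0)" for n
        proof -
          have "0 < 1 / real (Suc (Suc n))" "1 / real (Suc (Suc n)) < (1::real)" by auto
          then show ?thesis unfolding s_def using pt_in_closure[OF yh] by blast
        qed
        have l0: "(\<lambda>n. 1 / real (Suc (Suc n))) \<longlonglongrightarrow> 0"
          using LIMSEQ_Suc[OF LIMSEQ_Suc[OF lim_inverse_n']] by simp
        have "(\<lambda>n. (real y + 1 / real (Suc (Suc n))) / h) \<longlonglongrightarrow> (real y + 0) / h"
          by (intro tendsto_intros l0) (use hne in auto)
        then have "s \<longlonglongrightarrow> circ ((real y + 0) / h)" unfolding s_def
          by (rule isCont_tendsto_compose[OF isCont_circ])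
        then have "circ ((real y + 0) / h) \<in> closure (orbit T D p0)"
          using sin closed_closure closed_sequential_limits by blast
        then show ?thesis using tv True t(3) by simp
      qed
    qed
  qed
qed

end



context slotcet
begin

lemma Idx_Sigma: "Idx = (SIGMA x:{..<h}. {..<np (ty x)}) - (if dbl then {(2,0)} else {})"
  unfolding Idx_def using dbl_ok by auto

lemma card_Idx: "card Idx = (\<Sum>x<h. np (ty x)) - (if dbl then 1 else 0)"
proof -
  have cS: "card (SIGMA x:{..<h}. {..<np (ty x)}) = (\<Sum>x<h. np (ty x))"
    by (subst card_SigmaI) auto
  show ?thesis
  proof (cases dbl)
    case True
    have "(2,0) \<in> (SIGMA x:{..<h}. {..<np (ty x)})" using True dbl_ok h3 by auto
    then show ?thesis using Idx_Sigma True cS by (simp add: card_Diff_singleton)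
  next
    case False then show ?thesis using Idx_Sigma cS by simp
  qed
qed

lemma card_flip: "card {i\<in>Idx. ee i} = (\<Sum>x<h. if isflip (ty x) then np (ty x) else 0) - (if dbl then 1 else 0)"
proof -
  have e: "{i\<in>Idx. ee i} = (SIGMA x:{x\<in>{..<h}. isflip (ty x)}. {..<np (ty x)}) - (if dbl then {(2,0)} else {})"
    unfolding Idx_Sigma ee_def by auto
  have cS: "card (SIGMA x:{x\<in>{..<h}. isflip (ty x)}. {..<np (ty x)}) = (\<Sum>x<h. if isflip (ty x) then np (ty x) else 0)"
  proof -
    have "card (SIGMA x:{x\<in>{..<h}. isflip (ty x)}. {..<np (ty x)}) = (\<Sum>x\<in>{x\<in>{..<h}. isflip (ty x)}. np (ty x))"
      by (subst card_SigmaI) auto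
    also have "\<dots> = (\<Sum>x<h. if isflip (ty x) then np (ty x) else 0)" by (rule sum.inter_filter) simp
    finally show ?thesis .
  qed
  show ?thesis
  proof (cases dbl)
    case True
    have "(2,0) \<in> (SIGMA x:{x\<in>{..<h}. isflip (ty x)}. {..<np (ty x)})" using True dbl_ok h3 by auto
    then show ?thesis using e True cS by (simp add: card_Diff_singleton)
  next
    case False then show ?thesis using e cS by simp
  qed
qed

end

context slotdyn
begin

theorem main_inst:
  "CET ((\<Sum>x<h. np (ty x)) - (if dbl then 1 else 0)) ((\<Sum>x<h. if isflip (ty x) then np (ty x) else 0) - (if dbl then 1 else 0)) T D
   \<and> transitive T D"
  using cet trans card_Idx card_flip by simp

end

lemma sum_nth_list: "(\<Sum>x<length L. g (L ! x)) = sum_list (map g L)"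
  by (simp add: sum_list_sum_nth atLeast0LessThan)

lemma irr_exists: "\<exists>th::real. th \<notin> \<rat> \<and> 0 < th \<and> th < 1"
proof -
  have "uncountable {0<..<(1::real)}" using uncountable_open_interval[of 0 "1::real"] by simp
  then have "\<not> {0<..<(1::real)} \<subseteq> \<rat>" using countable_rat countable_subset by blast
  then show ?thesis by auto
qed


lemma cyc_nxt:
  fixes f :: "nat \<Rightarrow> nat"
  assumes b: "bij_betw (\<lambda>i. (f ^^ i) 0) {..<h} {..<h}" and fh: "(f ^^ h) 0 = 0" and h: "0 < h"
  shows "\<And>x. x < h \<Longrightarrow> f x < h" "inj_on f {..<h}"
proof -
  have per: "(f ^^ n) 0 = (f ^^ (n mod h)) 0" for n
  proof -
    have "(f ^^ (h * k)) 0 = 0" for k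
      by (induction k) (auto simp: funpow_add fh)
    then have a: "(f ^^ (n mod h)) ((f ^^ (h * (n div h))) 0) = (f ^^ (n mod h)) 0" by simp
    have "(f ^^ n) 0 = (f ^^ (n mod h + h * (n div h))) 0" by simp
    also have "\<dots> = (f ^^ (n mod h)) ((f ^^ (h * (n div h))) 0)" by (simp only: funpow_add o_apply)
    finally show ?thesis using a by simp
  qed
  have rep: "\<exists>i<h. x = (f ^^ i) 0" if "x < h" for x
  proof -
    have "x \<in> (\<lambda>i. (f ^^ i) 0) ` {..<h}" using b that by (simp add: bij_betw_def)
    then show ?thesis by auto
  qed
  have fx: "f ((f ^^ i) 0) = (f ^^ ((i + 1) mod h)) 0" for i
    using per[of "Suc i"] by simp
  show "f x < h" if xh: "x < h" for x
  proof -
    obtain i where "i < h" "x = (f ^^ i) 0" using rep xh by blast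
    moreover have "(f ^^ ((i + 1) mod h)) 0 \<in> {..<h}" using b h by (auto simp: bij_betw_def)
    ultimately show ?thesis using fx by simp
  qed
  show "inj_on f {..<h}"
  proof (rule inj_onI)
    fix x y assume xy: "x \<in> {..<h}" "y \<in> {..<h}" "f x = f y"
    obtain i where i: "i < h" "x = (f ^^ i) 0" using rep xy(1) by auto
    obtain j where j: "j < h" "y = (f ^^ j) 0" using rep xy(2) by auto
    have "(f ^^ ((i + 1) mod h)) 0 = (f ^^ ((j + 1) mod h)) 0" using xy(3) i j fx by simp
    moreover have "(i + 1) mod h < h" "(j + 1) mod h < h" using h by auto
    ultimately have "(i + 1) mod h = (j + 1) mod h" using b unfolding bij_betw_def inj_on_def by blast
    then have "(1 + i) mod h = (1 + j) mod h" by (simp add: add.commute)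
    then have "i = j" using mod_add_inj i j by blast
    then show "x = y" using i j by simp
  qed
qed

lemma circle_family:
  fixes D A c b :: nat
  assumes hh: "3 \<le> D + A + c + b" and da: "1 \<le> D + A" and b1: "b \<le> 1" and ev: "even (D + c)"
  shows "\<exists>T Dm. CET (2 * D + 2 * A + c + b) (2 * D + c) T Dm \<and> transitive T Dm"
proof -
  define L where "L = replicate D IP @ replicate A TT @ replicate c FF @ replicate b Id"
  define h where "h = D + A + c + b"
  have lenL: "length L = h" by (simp add: L_def h_def)
  have Lv: "L ! x = (if x < D then IP else if x < D + A then TT else if x < D + A + c then FF else Id)"
    if "x < h" for x
    using that unfolding L_def h_def by (auto simp: nth_append)
  obtain th :: real where th: "th \<notin> \<rat>" "0 < th" "th < 1" using irr_exists by blast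
  define cs where "cs x = (if x = 0 then th else 1/2)" for x :: nat
  define nxt where "nxt x = (x + 1) mod h" for x
  have h3: "3 \<le> h" using hh by (simp add: h_def)
  have it: "(nxt ^^ i) 0 = i mod h" for i
  proof (induction i)
    case 0 then show ?case by simp
  next
    case (Suc i) then show ?case by (simp add: nxt_def mod_Suc_eq)
  qed
  have cyc: "bij_betw (\<lambda>i. (nxt ^^ i) 0) {..<h} {..<h}"
  proof -
    have "bij_betw (\<lambda>i. i) {..<h} {..<h}" by (simp add: bij_betw_def)
    then show ?thesis by (rule bij_betw_cong[THEN iffD1, rotated]) (simp add: it)
  qed
  have cych: "(nxt ^^ h) 0 = 0" by (simp add: it)
  have h0: "0 < h" using h3 by simp
  note cn = cyc_nxt[OF cyc cych h0]
  have idpos: "x = h - 1" if "x < h" "L ! x = Id" for x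
    using that Lv[OF that(1)] b1 by (auto simp: h_def split: if_splits)
  have bd: "bok h (L ! ((y + h - 1) mod h)) (L ! y) (nxt ((y + h - 1) mod h)) (nxt y)" if y: "y < h" for y
  proof -
    define p where "p = (y + h - 1) mod h"
    have pv: "(1 \<le> y \<and> p = y - 1) \<or> (y = 0 \<and> p = h - 1)"
    proof (cases "y = 0")
      case True then show ?thesis using h3 by (simp add: p_def)
    next
      case False
      then have e: "y + h - 1 = (y - 1) + h" using h3 by simp
      have "p = ((y - 1) + h) mod h" unfolding p_def e ..
      also have "\<dots> = y - 1" using y by simp
      finally show ?thesis using False by simp
    qed
    have ph: "p < h" using h3 by (simp add: p_def)
    have pny: "p \<noteq> y" using pv h3 by auto
    have np: "nxt p = y" using pv y h3 by (auto simp: nxt_def)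
    have c1: "\<not> (L ! p = Id \<and> L ! y = Id)" using idpos[OF ph] idpos[OF y] pny by auto
    have c2: "y \<noteq> (nxt y + 1) mod h"
    proof
      assume a: "y = (nxt y + 1) mod h"
      have "(nxt y + 1) mod h = (y + 2) mod h" by (simp add: nxt_def mod_Suc_eq)
      then have "y = (y + 2) mod h" using a by simp
      moreover have "(y + 2) mod h = (if y + 2 < h then y + 2 else y + 2 - h)"
      proof (cases "y + 2 < h")
        case False
        then have "y + 2 - h < h" using y h3 by linarith
        then show ?thesis using False by (simp add: le_mod_geq)
      qed simp
      ultimately show False using h3 y by (auto split: if_splits)
    qed
    show ?thesis unfolding bok_def p_def[symmetric] using c1 c2 np by auto
  qed
  have xs_ty: "L ! 0 = TT \<or> L ! 0 = IP" using Lv[of 0] h3 da by auto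
  have refl: "even (card {x. x < h \<and> isflip (L ! x)})"
  proof -
    have "card {x. x < h \<and> isflip (L ! x)} = length (filter isflip L)"
      using length_filter_conv_card[of isflip L] lenL by simp
    also have "\<dots> = D + c" by (simp add: L_def)
    finally show ?thesis using ev by simp
  qed
  interpret sd: slotdyn h "\<lambda>x. L ! x" cs nxt False th 0
  proof (unfold_locales)
    show "3 \<le> h" by (rule h3)
    show "\<And>x. 0 < cs x" "\<And>x. cs x < 1" using th by (auto simp: cs_def)
    show "\<And>x. x < h \<Longrightarrow> nxt x < h" using cn(1) by blast
    show "inj_on nxt {..<h}" by (rule cn(2))
    show "False \<Longrightarrow> L ! 1 = FF \<and> L ! 2 = FF \<and> nxt 1 = (nxt 2 + 1) mod h" by simp
    show "\<And>y. y < h \<Longrightarrow> \<not> (False \<and> y = 2) \<Longrightarrow> bok h (L ! ((y + h - 1) mod h)) (L ! y) (nxt ((y + h - 1) mod h)) (nxt y)"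
      using bd by blast
    show "th \<notin> \<rat>" "0 < th" "th < 1" by (rule th)+
    show "\<And>x. cs x = (if x = 0 then th else 1/2)" by (simp add: cs_def)
    show "0 < h" using h3 by simp
    show "L ! 0 = TT \<or> L ! 0 = IP" by (rule xs_ty)
    show "bij_betw (\<lambda>i. (nxt ^^ i) 0) {..<h} {..<h}" by (rule cyc)
    show "(nxt ^^ h) 0 = 0" by (rule cych)
    show "even (card {x. x < h \<and> isflip (L ! x)})" by (rule refl)
  qed
  have s1: "(\<Sum>x<h. np (L ! x)) = 2 * D + 2 * A + c + b"
    using sum_nth_list[of np L] lenL by (simp add: L_def sum_list_replicate)
  have s2: "(\<Sum>x<h. if isflip (L ! x) then np (L ! x) else 0) = 2 * D + c"
    using sum_nth_list[of "\<lambda>s. if isflip s then np s else 0" L] lenL by (simp add: L_def sum_list_replicate)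
  show ?thesis using sd.main_inst s1 s2 by auto
qed


lemma p6_family:
  fixes s0 s3 :: sty and m :: nat
  assumes A: "(s0 = TT \<and> (s3 = Id \<or> s3 = TT)) \<or> (s0 = FF \<and> s3 = IP \<and> m = 0)"
  shows "\<exists>T Dm. CET (np s0 + np s3 + 2 * m + 1)
            ((if isflip s0 then np s0 else 0) + (if isflip s3 then np s3 else 0) + 1) T Dm \<and> transitive T Dm"
proof -
  define L where "L = [s0, FF, FF, s3] @ replicate m TT"
  define h where "h = 4 + m"
  have lenL: "length L = h" by (simp add: L_def h_def)
  have Lv: "L ! x = (if x = 0 then s0 else if x \<le> 2 then FF else if x = 3 then s3 else TT)"
    if "x < h" for x
  proof -
    consider "x = 0" | "x = 1" | "x = 2" | "x = 3" | "4 \<le> x" by linarith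
    then show ?thesis
    proof cases
      case 5 then show ?thesis using that by (simp add: L_def h_def nth_append)
    qed (simp_all add: L_def)
  qed
  have h4: "4 \<le> h" by (simp add: h_def)
  obtain th :: real where th: "th \<notin> \<rat>" "0 < th" "th < 1" using irr_exists by blast
  define xs where "xs = (if s0 = TT then 0 else (3::nat))"
  define cs where "cs x = (if x = xs then th else 1/2)" for x :: nat
  define nxt where "nxt x = (if x = 0 then 2 else if x = 1 then (if h = 4 then 0 else 4)
                      else if x = 2 then 3 else if x = 3 then 1 else (x + 1) mod h)" for x
  define q where "q i = (if i = 0 \<or> i = h then 0 else if i = 1 then 2 else if i = 2 then 3
                      else if i = 3 then (1::nat) else i)" for i
  have it: "(nxt ^^ i) 0 = q i" if "i \<le> h" for i
    using that
  proof (induction i)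
    case 0 then show ?case by (simp add: q_def)
  next
    case (Suc i)
    then have ih: "(nxt ^^ i) 0 = q i" and ih2: "i < h" by auto
    have "(nxt ^^ Suc i) 0 = nxt (q i)" using ih by simp
    also have "\<dots> = q (Suc i)"
    proof -
      consider "i = 0" | "i = 1" | "i = 2" | "i = 3" | "4 \<le> i" by linarith
      then show ?thesis
      proof cases
        case 1 then show ?thesis using h4 by (simp add: q_def nxt_def)
      next
        case 2 then show ?thesis using h4 by (simp add: q_def nxt_def)
      next
        case 3 then show ?thesis using h4 by (simp add: q_def nxt_def)
      next
        case 4 then show ?thesis using h4 by (simp add: q_def nxt_def)
      next
        case 5
        then have qi: "q i = i" using ih2 by (simp add: q_def)
        show ?thesis
        proof (cases "Suc i = h")
          case True then show ?thesis using qi 5 by (simp add: q_def nxt_def)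
        next
          case False then show ?thesis using qi 5 ih2 by (simp add: q_def nxt_def)
        qed
      qed
    qed
    finally show ?case .
  qed
  have qinj: "inj_on q {..<h}" unfolding inj_on_def q_def by auto
  have qsub: "q ` {..<h} \<subseteq> {..<h}" using h4 by (auto simp: q_def)
  have qbij: "bij_betw q {..<h} {..<h}"
  proof -
    have "card (q ` {..<h}) = h" using card_image[OF qinj] by simp
    then have "q ` {..<h} = {..<h}" using qsub by (simp add: card_subset_eq)
    then show ?thesis using qinj by (simp add: bij_betw_def)
  qed
  have cyc: "bij_betw (\<lambda>i. (nxt ^^ i) 0) {..<h} {..<h}"
    by (rule bij_betw_cong[THEN iffD1, OF _ qbij]) (simp add: it)
  have cych: "(nxt ^^ h) 0 = 0" using it[of h] by (simp add: q_def)
  have h0: "0 < h" using h4 by simp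
  note cn = cyc_nxt[OF cyc cych h0]
  have s3nf: "s3 \<noteq> FF" "s0 \<noteq> Id" using A by auto
  have n01: "nxt 0 \<noteq> (nxt 1 + 1) mod h"
  proof (cases "h = 4")
    case True then show ?thesis by (simp add: nxt_def)
  next
    case False
    then have "5 \<le> h" using h4 by simp
    then have "(4 + 1) mod h \<noteq> 2"
      by (cases "h = 5") (simp_all add: mod_less)
    then show ?thesis using False by (simp add: nxt_def)
  qed
  have bd: "bok h (L ! ((y + h - 1) mod h)) (L ! y) (nxt ((y + h - 1) mod h)) (nxt y)"
    if y: "y < h" "y \<noteq> 2" for y
  proof -
    define p where "p = (y + h - 1) mod h"
    have ph: "p < h" using h4 by (simp add: p_def)
    consider "y = 0" | "y = 1" | "y = 3" | "4 \<le> y" using y by linarith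
    then have "bok h (L ! p) (L ! y) (nxt p) (nxt y)"
    proof cases
      case 1
      then have pv: "p = h - 1" using h4 by (simp add: p_def)
      have "L ! p \<noteq> FF" using Lv[OF ph] pv h4 s3nf by auto
      moreover have "L ! y \<noteq> Id" using Lv[OF y(1)] 1 s3nf by simp
      ultimately show ?thesis by (simp add: bok_def)
    next
      case 2
      then have pv: "p = 0" using h4 by (simp add: p_def)
      have "L ! y \<noteq> Id" using Lv[OF y(1)] 2 by simp
      then show ?thesis using n01 pv 2 by (auto simp: bok_def)
    next
      case 3
      then have "p = (2 + h) mod h" unfolding p_def using h4 by (simp add: add.commute)
      moreover have "(2 + h) mod h = 2 mod h" by (rule mod_add_self2)
      moreover have "(2::nat) mod h = 2" using h4 by simp
      ultimately have pv: "p = 2" by simp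
      have "L ! p \<noteq> Id" using Lv[OF ph] pv by simp
      moreover have "L ! y \<noteq> FF" using Lv[OF y(1)] 3 s3nf by simp
      ultimately show ?thesis by (simp add: bok_def)
    next
      case 4
      have "L ! y = TT" using Lv[OF y(1)] 4 by simp
      then show ?thesis by (simp add: bok_def)
    qed
    then show ?thesis by (simp add: p_def)
  qed
  have xs_ty: "L ! xs = TT \<or> L ! xs = IP" using A Lv[of 0] Lv[of 3] h4 by (auto simp: xs_def)
  have xsh: "xs < h" using h4 by (simp add: xs_def)
  have refl: "even (card {x. x < h \<and> isflip (L ! x)})"
  proof -
    have "card {x. x < h \<and> isflip (L ! x)} = length (filter isflip L)"
      using length_filter_conv_card[of isflip L] lenL by simp
    then show ?thesis using A by (auto simp: L_def)
  qed
  have dblok: "L ! 1 = FF \<and> L ! 2 = FF \<and> nxt 1 = (nxt 2 + 1) mod h"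
  proof -
    have "nxt 1 = (nxt 2 + 1) mod h"
    proof (cases "h = 4")
      case True then show ?thesis by (simp add: nxt_def)
    next
      case False then have "4 < h" using h4 by simp
      then show ?thesis using False by (simp add: nxt_def)
    qed
    then show ?thesis by (simp add: L_def)
  qed
  interpret sd: slotdyn h "\<lambda>x. L ! x" cs nxt True th xs
  proof (unfold_locales)
    show "3 \<le> h" using h4 by simp
    show "\<And>x. 0 < cs x" "\<And>x. cs x < 1" using th by (auto simp: cs_def)
    show "\<And>x. x < h \<Longrightarrow> nxt x < h" using cn(1) by blast
    show "inj_on nxt {..<h}" by (rule cn(2))
    show "True \<Longrightarrow> L ! 1 = FF \<and> L ! 2 = FF \<and> nxt 1 = (nxt 2 + 1) mod h" using dblok by blast
    show "\<And>y. y < h \<Longrightarrow> \<not> (True \<and> y = 2) \<Longrightarrow> bok h (L ! ((y + h - 1) mod h)) (L ! y) (nxt ((y + h - 1) mod h)) (nxt y)"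
      using bd by blast
    show "th \<notin> \<rat>" "0 < th" "th < 1" by (rule th)+
    show "\<And>x. cs x = (if x = xs then th else 1/2)" by (simp add: cs_def)
    show "xs < h" by (rule xsh)
    show "L ! xs = TT \<or> L ! xs = IP" by (rule xs_ty)
    show "bij_betw (\<lambda>i. (nxt ^^ i) 0) {..<h} {..<h}" by (rule cyc)
    show "(nxt ^^ h) 0 = 0" by (rule cych)
    show "even (card {x. x < h \<and> isflip (L ! x)})" by (rule refl)
  qed
  have s1: "(\<Sum>x<h. np (L ! x)) = np s0 + np s3 + 2 * m + 2"
  proof -
    have "(\<Sum>x<h. np (L ! x)) = sum_list (map np L)" using sum_nth_list[of np L] unfolding lenL .
    also have "\<dots> = np s0 + np s3 + 2 * m + 2" by (simp add: L_def sum_list_replicate)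
    finally show ?thesis .
  qed
  have s2: "(\<Sum>x<h. if isflip (L ! x) then np (L ! x) else 0) =
            (if isflip s0 then np s0 else 0) + (if isflip s3 then np s3 else 0) + 2"
  proof -
    have "(\<Sum>x<h. if isflip (L ! x) then np (L ! x) else 0) = sum_list (map (\<lambda>s. if isflip s then np s else 0) L)"
      using sum_nth_list[of "\<lambda>s. if isflip s then np s else 0" L] unfolding lenL .
    also have "\<dots> = (if isflip s0 then np s0 else 0) + (if isflip s3 then np s3 else 0) + 2"
      by (simp add: L_def sum_list_replicate)
    finally show ?thesis .
  qed
  have "CET (np s0 + np s3 + 2 * m + 1)
            ((if isflip s0 then np s0 else 0) + (if isflip s3 then np s3 else 0) + 1) sd.T sd.D \<and> transitive sd.T sd.D"
    using sd.main_inst s1 s2 by simp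
  then show ?thesis by blast
qed


theorem theorem9p1:
  fixes n f :: nat
  assumes "4 \<le> n" and "1 \<le> f" and "f \<le> n"
  shows "\<exists>T D. CET n f T D \<and> transitive T D"
proof -
  consider "f = 1" | "n = 4 \<and> f = 4" | "2 \<le> f \<and> \<not> (n = 4 \<and> f = 4)" using assms by linarith
  then show ?thesis
  proof cases
    case 1
    show ?thesis
    proof (cases "even n")
      case True
      define m where "m = (n - 4) div 2"
      have m: "n = 4 + 2 * m" using True assms(1) unfolding m_def by presburger
      have "(TT = TT \<and> (Id = Id \<or> Id = TT)) \<or> (TT = FF \<and> Id = IP \<and> m = 0)" by simp
      from p6_family[OF this] show ?thesis using m 1 by simp
    next
      case False
      define m where "m = (n - 5) div 2"
      have m: "n = 5 + 2 * m" using False assms(1) unfolding m_def by presburger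
      have "(TT = TT \<and> (TT = Id \<or> TT = TT)) \<or> (TT = FF \<and> TT = IP \<and> m = 0)" by simp
      from p6_family[OF this] show ?thesis using m 1 by simp
    qed
  next
    case 2
    have pre: "(FF = TT \<and> (IP = Id \<or> IP = TT)) \<or> (FF = FF \<and> IP = IP \<and> (0::nat) = 0)" by simp
    have eq: "np FF + np IP + 2 * 0 + 1 = 4" "(if isflip FF then np FF else 0) + (if isflip IP then np IP else 0) + 1 = 4"
      by simp_all
    have r: "\<exists>T D. CET 4 4 T D \<and> transitive T D" by (rule p6_family[OF pre, unfolded eq])
    have n4: "n = 4" "f = 4" using 2 by auto
    show ?thesis unfolding n4 by (rule r)
  next
    case 3
    define b where "b = (n - f) mod 2"
    define A where "A = (n - f) div 2"
    define q where "q = f div 4"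
    define r where "r = f mod 4"
    define c where "c = (if r = 0 then 0 else if r = 1 then 3 else if r = 2 then 2 else (1::nat))"
    define D where "D = (if r = 0 then 2 * q else if r = 1 then 2 * q - 1 else if r = 2 then 2 * q else 2 * q + 1)"
    have e1: "n - f = 2 * A + b" unfolding A_def b_def by simp
    have b1: "b \<le> 1" unfolding b_def by simp
    have fq: "f = 4 * q + r" unfolding q_def r_def by simp
    have r4: "r < 4" unfolding r_def by simp
    have q1: "r = 1 \<Longrightarrow> 1 \<le> q" using fq 3 by auto
    have e2c: "f = 2 * D + c \<and> even (D + c) \<and> c \<le> 3"
    proof -
      consider "r = 0" | "r = 1" | "r = 2" | "r = 3" using r4 by linarith
      then show ?thesis
      proof cases
        case 1 then show ?thesis using fq by (auto simp: c_def D_def)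
      next
        case 2 then show ?thesis using fq q1 by (auto simp: c_def D_def)
      next
        case 3 then show ?thesis using fq by (auto simp: c_def D_def)
      next
        case 4 then show ?thesis using fq by (auto simp: c_def D_def)
      qed
    qed
    then have e2: "f = 2 * D + c" "even (D + c)" "c \<le> 3" by auto
    have nsum: "n = 2 * D + 2 * A + c + b" using e1 e2(1) assms(3) by linarith
    have small: "3 \<le> D + A + c + b \<and> 1 \<le> D + A"
    proof (cases "6 \<le> n")
      case True then show ?thesis using nsum b1 e2(3) by linarith
    next
      case False
      then have "n = 4 \<or> n = 5" using assms(1) by linarith
      moreover have "f \<le> 5" using False assms(3) by linarith
      ultimately have "(n = 4 \<and> (f = 2 \<or> f = 3)) \<or> (n = 5 \<and> (f = 2 \<or> f = 3 \<or> f = 4 \<or> f = 5))"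
        using 3 assms by auto
      then show ?thesis
        by (elim disjE conjE) (simp_all add: A_def b_def c_def D_def q_def r_def)
    qed
    have c1: "3 \<le> D + A + c + b" "1 \<le> D + A" "b \<le> 1" "even (D + c)"
         "2 * D + 2 * A + c + b = n" "2 * D + c = f"
      using small b1 e2 nsum by auto
    from circle_family[OF c1(1-4)] show ?thesis using c1(5,6) by simp
  qed
qed



end
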